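(* Let $\beta>0$ and $x\in(\lambda_t^-,\lambda^+)$, and let $\alpha^*$ be such that $\psi_x^*(0)=\int\log(1+\alpha^*(x-\lambda))\,d\mu_\lambda$. Then $$\alpha^*=\begin{cases}\frac{1}{\lambda^+-x} & \text{if } x\ge1+\sqrt\beta,\\ -\frac{1}{x-\lambda^-} & \text{if } x\le1-\sqrt\beta\text{ and }\beta<1,\\ \frac1\beta\frac{x-1}{x} & \text{otherwise.}\end{cases}$$
   Context: Let $\lambda^\pm=(1\pm\sqrt\beta)^2$, $\mu_\lambda$ the probability measure $d\mu_\lambda=\Big((1-\tfrac1\beta)^+\delta(\lambda)+\frac{\sqrt{(\lambda-\lambda^-)^+(\lambda^+-\lambda)^+}}{2\pi\beta\lambda}\Big)d\lambda$, $\lambda_t^-=0$ if $\beta\ge1$ and $=\lambda^-$ if $\beta<1$. For $x\in(\lambda_t^-,\lambda^+)$, $\psi_x(\alpha)=-\int\log(1-\alpha(\lambda-x))\,d\mu_\lambda$ for $\alpha\in[-\frac1{x-\lambda_t^-},\frac1{\lambda^+-x}]$ and $+\infty$ otherwise, and $\psi_x^*(t)=\sup_{\alpha\in\mathbb R}(\alpha t-\psi_x(\alpha))$. *)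

theory Defs
  imports "HOL-Analysis.Analysis"
begin

definition lam_plus :: "real \<Rightarrow> real" where
  "lam_plus \<beta> = (1 + sqrt \<beta>)^2"

definition lam_minus :: "real \<Rightarrow> real" where
  "lam_minus \<beta> = (1 - sqrt \<beta>)^2"

definition lam_t_minus :: "real \<Rightarrow> real" where
  "lam_t_minus \<beta> = (if \<beta> \<ge> 1 then 0 else lam_minus \<beta>)"

definition mp_density :: "real \<Rightarrow> real \<Rightarrow> real" where
  "mp_density \<beta> l =
     sqrt (max 0 (l - lam_minus \<beta>) * max 0 (lam_plus \<beta> - l)) / (2 * pi * \<beta> * l)"

definition mp_measure :: "real \<Rightarrow> real measure" where
  "mp_measure \<beta> = measure_of UNIV (sets borel)
     (\<lambda>A. ennreal (max 0 (1 - 1/\<beta>)) * indicator A 0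
          + (\<integral>\<^sup>+ l. ennreal (mp_density \<beta> l) * indicator A l \<partial>lborel))"

text \<open>psi_x(alpha) as an extended real: the integral of -log(1 - alpha(l - x)) is
  +infinity unless the argument is a.e. positive and the logarithm is integrable
  (the negative part of -log is bounded on the compact support).\<close>
definition psi :: "real \<Rightarrow> real \<Rightarrow> real \<Rightarrow> ereal" where
  "psi \<beta> x \<alpha> =
     (if \<alpha> \<in> {-1 / (x - lam_t_minus \<beta>) .. 1 / (lam_plus \<beta> - x)}
         \<and> (AE l in mp_measure \<beta>. 1 - \<alpha> * (l - x) > 0)
         \<and> integrable (mp_measure \<beta>) (\<lambda>l. ln (1 - \<alpha> * (l - x)))
      then ereal (- (\<integral>l. ln (1 - \<alpha> * (l - x)) \<partial>mp_measure \<beta>))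
      else \<infinity>)"

definition psi_star :: "real \<Rightarrow> real \<Rightarrow> real \<Rightarrow> ereal" where
  "psi_star \<beta> x t = (SUP \<alpha>\<in>(UNIV::real set). ereal (\<alpha> * t) - psi \<beta> x \<alpha>)"

end

theory Submission
  imports Defs
begin


definition c0 :: "real \<Rightarrow> real" where "c0 \<beta> = max 0 (1 - 1/\<beta>)"
definition gfun :: "real \<Rightarrow> real \<Rightarrow> real" where
  "gfun \<beta> l = mp_density \<beta> l + c0 \<beta> * indicator {-2..-1} l"
definition hfun :: "real \<Rightarrow> real" where "hfun l = (if l \<in> {-2..-1} then 0 else l)"
definition NN :: "real \<Rightarrow> real measure" where
  "NN \<beta> = distr (density lborel (gfun \<beta>)) borel hfun"

lemma lam_minus_nonneg: "0 \<le> lam_minus \<beta>" by (simp add: lam_minus_def)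

lemma mp_density_zero: "l \<le> lam_minus \<beta> \<or> l \<ge> lam_plus \<beta> \<Longrightarrow> mp_density \<beta> l = 0"
  by (auto simp: mp_density_def)

lemma mp_density_nonneg: "\<beta> > 0 \<Longrightarrow> 0 \<le> mp_density \<beta> l"
proof (cases "l \<le> lam_minus \<beta>")
  case True then show ?thesis by (simp add: mp_density_zero)
next
  case False
  then have "l > 0" using lam_minus_nonneg[of \<beta>] by linarith
  moreover assume "\<beta> > 0"
  ultimately show ?thesis unfolding mp_density_def by (auto intro!: divide_nonneg_pos)
qed

lemma mp_density_meas[measurable]: "mp_density \<beta> \<in> borel_measurable borel"
  unfolding mp_density_def by measurable

lemma gfun_meas[measurable]: "gfun \<beta> \<in> borel_measurable borel"
  unfolding gfun_def by measurable

lemma hfun_meas[measurable]: "hfun \<in> borel_measurable borel"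
  unfolding hfun_def by measurable

lemma c0_nonneg: "0 \<le> c0 \<beta>" by (simp add: c0_def)

lemma gfun_nonneg: "\<beta> > 0 \<Longrightarrow> 0 \<le> gfun \<beta> l"
  unfolding gfun_def using mp_density_nonneg[of \<beta> l] c0_nonneg[of \<beta>] by (simp add: indicator_def)

lemma emeasure_NN:
  assumes b: "\<beta> > 0" and A: "A \<in> sets borel"
  shows "emeasure (NN \<beta>) A = ennreal (c0 \<beta>) * indicator A 0
          + (\<integral>\<^sup>+ l. ennreal (mp_density \<beta> l) * indicator A l \<partial>lborel)"
proof -
  have [measurable]: "A \<in> sets borel" by fact
  have "emeasure (NN \<beta>) A = emeasure (density lborel (gfun \<beta>)) (hfun -` A)"
    unfolding NN_def using A by (subst emeasure_distr) auto
  also have "\<dots> = (\<integral>\<^sup>+ l. ennreal (gfun \<beta> l) * indicator (hfun -` A) l \<partial>lborel)"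
    using measurable_sets_borel[OF hfun_meas A] by (subst emeasure_density) (auto)
  also have "\<dots> = (\<integral>\<^sup>+ l. ennreal (mp_density \<beta> l) * indicator A l
        + ennreal (c0 \<beta>) * indicator A 0 * indicator {-2..-1} l \<partial>lborel)"
  proof (intro nn_integral_cong)
    fix l :: real
    show "ennreal (gfun \<beta> l) * indicator (hfun -` A) l = ennreal (mp_density \<beta> l) * indicator A l
        + ennreal (c0 \<beta>) * indicator A 0 * indicator {-2..-1} l"
    proof (cases "l \<in> {-2..-1}")
      case True
      then have "mp_density \<beta> l = 0" using lam_minus_nonneg[of \<beta>] by (intro mp_density_zero) auto
      then show ?thesis using True by (simp add: gfun_def hfun_def indicator_def)
    next
      case False
      have "hfun l = l" "gfun \<beta> l = mp_density \<beta> l" using False by (auto simp: gfun_def hfun_def)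
      then show ?thesis using False by (simp add: indicator_def)
    qed
  qed
  also have "\<dots> = (\<integral>\<^sup>+ l. ennreal (mp_density \<beta> l) * indicator A l \<partial>lborel)
      + (\<integral>\<^sup>+ l. ennreal (c0 \<beta>) * indicator A 0 * indicator {-2..-1} (l::real) \<partial>lborel)"
    by (rule nn_integral_add) auto
  also have "(\<integral>\<^sup>+ l. ennreal (c0 \<beta>) * indicator A 0 * indicator {-2..-1} (l::real) \<partial>lborel)
      = ennreal (c0 \<beta>) * indicator A 0 * emeasure lborel {-2..-1::real}"
    by (subst nn_integral_cmult_indicator) auto
  finally show ?thesis by (simp add: add.commute)
qed

lemma mp_measure_eq: assumes b: "\<beta> > 0" shows "mp_measure \<beta> = NN \<beta>"
proof -
  let ?F = "\<lambda>A. ennreal (max 0 (1 - 1/\<beta>)) * indicator A (0::real)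
          + (\<integral>\<^sup>+ l. ennreal (mp_density \<beta> l) * indicator A l \<partial>lborel)"
  have eq: "\<And>A. A \<in> sets borel \<Longrightarrow> ?F A = emeasure (NN \<beta>) A"
    using emeasure_NN[OF b] by (simp add: c0_def)
  have sN: "sets (NN \<beta>) = sets borel" by (simp add: NN_def)
  have ca: "countably_additive (sets borel) ?F"
    unfolding countably_additive_def
  proof (intro allI impI)
    fix B :: "nat \<Rightarrow> real set"
    assume B: "range B \<subseteq> sets borel" "disjoint_family B" "\<Union> (range B) \<in> sets borel"
    have "(\<Sum>i. ?F (B i)) = (\<Sum>i. emeasure (NN \<beta>) (B i))"
      using B eq by auto
    also have "\<dots> = emeasure (NN \<beta>) (\<Union> (range B))"
      using B by (intro suminf_emeasure) (auto simp: sN)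
    also have "\<dots> = ?F (\<Union> (range B))" using eq B by simp
    finally show "(\<Sum>i. ?F (B i)) = ?F (\<Union> (range B))" .
  qed
  have pos: "positive (sets borel) ?F" unfolding positive_def by simp
  show ?thesis
  proof (rule measure_eqI)
    show "sets (mp_measure \<beta>) = sets (NN \<beta>)" using sets.sigma_sets_eq[of borel] by (simp add: mp_measure_def sN)
    fix A assume "A \<in> sets (mp_measure \<beta>)"
    then have A: "A \<in> sets borel" using sets.sigma_sets_eq[of borel] by (auto simp: mp_measure_def)
    have "emeasure (mp_measure \<beta>) A = ?F A"
      unfolding mp_measure_def
      by (rule emeasure_measure_of_sigma[OF _ pos ca A]) (metis sets.sigma_algebra_axioms space_borel)
    then show "emeasure (mp_measure \<beta>) A = emeasure (NN \<beta>) A" using eq[OF A] by simp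
  qed
qed



definition Rf :: "real \<Rightarrow> real \<Rightarrow> real \<Rightarrow> real" where
  "Rf c r l = sqrt ((l - (c - r)) * ((c + r) - l))"

lemma Rf_sq: fixes c r l :: real shows "(l - (c - r)) * ((c + r) - l) = r^2 - (l - c)^2"
  by (simp add: power2_eq_square algebra_simps)

lemma Rf_pos: "c - r < l \<Longrightarrow> l < c + r \<Longrightarrow> Rf c r l > 0"
  by (simp add: Rf_def)

lemma Rf_sq2: "c - r \<le> l \<Longrightarrow> l \<le> c + r \<Longrightarrow> (Rf c r l)^2 = r^2 - (l - c)^2"
  by (simp add: Rf_def Rf_sq[symmetric])

lemma Rf_end: "Rf c r (c + r) = 0" "Rf c r (c - r) = 0" by (simp_all add: Rf_def)

lemma D_Rf:
  assumes "c - r < l" "l < c + r"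
  shows "(Rf c r has_real_derivative (c - l) / Rf c r l) (at l)"
proof -
  have p: "(l - (c - r)) * ((c + r) - l) > 0" using assms by simp
  have d: "((\<lambda>l. (l - (c - r)) * ((c + r) - l)) has_real_derivative ((c + r) - l) - (l - (c - r))) (at l)"
    by (auto intro!: derivative_eq_intros)
  show ?thesis unfolding Rf_def
    by (rule DERIV_cong[OF DERIV_chain2[OF DERIV_real_sqrt[OF p] d]]) (simp add: divide_simps)
qed

lemma D_asin:
  assumes r: "r > 0" and "c - r < l" "l < c + r"
  shows "((\<lambda>l. arcsin ((l - c) / r)) has_real_derivative 1 / Rf c r l) (at l)"
proof -
  have lt: "-1 < (l - c) / r" "(l - c) / r < 1" using assms by (auto simp: field_simps)
  have e: "sqrt (1 - ((l - c) / r)^2) * r = Rf c r l"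
  proof -
    have "1 - ((l - c) / r)^2 = (Rf c r l / r)^2"
      using assms Rf_sq2[of c r l] by (simp add: field_simps power_divide)
    then have "sqrt (1 - ((l - c) / r)^2) = Rf c r l / r"
      using Rf_pos[of c r l] assms by simp
    then show ?thesis using r by simp
  qed
  have d: "((\<lambda>l. (l - c) / r) has_real_derivative 1 / r) (at l)"
    using r by (auto intro!: derivative_eq_intros)
  show ?thesis
    apply (rule DERIV_cong[OF DERIV_chain2[OF DERIV_arcsin[OF lt] d]])
    using e r by (simp add: divide_simps)
qed

lemma D_K:
  fixes a c r l :: real
  assumes r: "r > 0" and dr: "\<bar>a - c\<bar> > r" and l: "c - r < l" "l < c + r"
  defines "d \<equiv> a - c"
  defines "S \<equiv> sqrt (d^2 - r^2)"
  shows "((\<lambda>l. arcsin ((r^2 - d * (l - c)) / (r * (a - l)))) has_real_derivative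
           - (sgn d * S) / ((a - l) * Rf c r l)) (at l)"
proof -
  define t where "t = l - c"
  have al: "a - l = d - t" by (simp add: d_def t_def)
  have tr: "\<bar>t\<bar> < r" using l by (auto simp: t_def)
  have sgn2: "sgn d * sgn d = 1" using dr r by (auto simp: d_def sgn_if)
  have sal: "sgn d * (a - l) > 0" using dr tr r unfolding al d_def by (auto simp: sgn_if)
  have anz: "a - l \<noteq> 0" using sal by auto
  have "r^2 < \<bar>d\<bar>^2" using power_strict_mono[of r "\<bar>d\<bar>" 2] dr r by (simp add: d_def)
  then have rd: "r^2 < d^2" by simp
  have S2: "S^2 = d^2 - r^2" unfolding S_def using rd by simp
  have rdS: "r^2 - d^2 = -(S^2)" using S2 by simp
  have Spos: "S > 0" unfolding S_def using rd by simp
  have R2: "(Rf c r l)^2 = r^2 - t^2" using Rf_sq2[of c r l] l by (simp add: t_def)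
  have Rpos: "Rf c r l > 0" using Rf_pos l by auto
  define u where "u = (r^2 - d * (l - c)) / (r * (a - l))"
  have poly: "r^2 * (d - t)^2 - (r^2 - d * t)^2 = (d^2 - r^2) * (r^2 - t^2)"
    by (simp add: power2_eq_square algebra_simps)
  have dt: "d - t \<noteq> 0" using anz al by simp
  have u_t: "u = (r^2 - d * t) / (r * (d - t))" by (simp add: u_def t_def al)
  have rhs: "(S * Rf c r l / (r * (a - l)))^2 = (d^2 - r^2) * (r^2 - t^2) / (r^2 * (d - t)^2)"
    by (simp add: power_divide power_mult_distrib S2 R2 al)
  have lhs: "1 - u^2 = (r^2 * (d - t)^2 - (r^2 - d * t)^2) / (r^2 * (d - t)^2)"
    using r dt by (simp add: u_t power_divide power_mult_distrib divide_simps)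
  have key: "1 - u^2 = (S * Rf c r l / (r * (a - l)))^2"
    unfolding lhs rhs poly ..
  have "1 - u^2 > 0" unfolding key using Spos Rpos anz r by simp
  then have "u^2 < 1" by simp
  then have "\<bar>u\<bar> < 1" using abs_square_less_1 by blast
  then have lt: "-1 < u" "u < 1" by auto
  have sq: "sqrt (1 - u^2) = S * Rf c r l / (r * (sgn d * (a - l)))"
  proof -
    have "sqrt (1 - u^2) = \<bar>S * Rf c r l / (r * (a - l))\<bar>" unfolding key by simp
    also have "\<dots> = S * Rf c r l / (r * (sgn d * (a - l)))"
      using Spos Rpos r sal sgn2 by (auto simp: abs_mult abs_divide sgn_if split: if_splits)
    finally show ?thesis .
  qed
  have du: "((\<lambda>l. (r^2 - d * (l - c)) / (r * (a - l))) has_real_derivative (r^2 - d^2) / (r * (a - l)^2)) (at l)"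
  proof -
    have n: "((\<lambda>l. r^2 - d * (l - c)) has_real_derivative - d) (at l)"
      by (auto intro!: derivative_eq_intros)
    have m: "((\<lambda>l. r * (a - l)) has_real_derivative - r) (at l)"
      by (auto intro!: derivative_eq_intros)
    show ?thesis
      apply (rule DERIV_cong[OF DERIV_quotient[OF n m]])
      using r anz apply simp
      using r anz dt unfolding al t_def
      by (simp add: divide_simps power2_eq_square) (simp add: algebra_simps)
  qed
  show ?thesis
    apply (rule DERIV_cong[OF DERIV_chain2[OF DERIV_arcsin[OF lt[unfolded u_def]] du]])
    unfolding sq[unfolded u_def] rdS
    using Spos Rpos r anz
    by (simp add: divide_simps) (simp add: algebra_simps power2_eq_square)
qed

lemma u_bound:
  fixes a c r l :: real
  assumes r: "r > 0" and dr: "\<bar>a - c\<bar> > r" and l: "c - r \<le> l" "l \<le> c + r"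
  shows "-1 \<le> (r^2 - (a - c) * (l - c)) / (r * (a - l))"
        "(r^2 - (a - c) * (l - c)) / (r * (a - l)) \<le> 1"
proof -
  define d where "d = a - c"
  define t where "t = l - c"
  have tr: "\<bar>t\<bar> \<le> r" using l by (auto simp: t_def)
  have al: "a - l = d - t" by (simp add: d_def t_def)
  have dt: "d - t \<noteq> 0" using tr dr by (auto simp: d_def)
  have "r^2 < \<bar>d\<bar>^2" using power_strict_mono[of r "\<bar>d\<bar>" 2] dr r by (simp add: d_def)
  then have rd: "r^2 < d^2" by simp
  have "t^2 \<le> r^2" using tr power_mono[of "\<bar>t\<bar>" r 2] by simp
  have poly: "r^2 * (d - t)^2 - (r^2 - d * t)^2 = (d^2 - r^2) * (r^2 - t^2)"
    by (simp add: power2_eq_square algebra_simps)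
  define u where "u = (r^2 - d * t) / (r * (d - t))"
  have "1 - u^2 = (d^2 - r^2) * (r^2 - t^2) / (r^2 * (d - t)^2)"
    using r dt unfolding poly[symmetric] by (simp add: u_def power_divide power_mult_distrib divide_simps)
  also have "\<dots> \<ge> 0" using rd \<open>t^2 \<le> r^2\<close> by (intro divide_nonneg_pos mult_nonneg_nonneg) (use r dt in auto)
  finally have "u^2 \<le> 1" by simp
  then have "\<bar>u\<bar> \<le> 1" using abs_square_le_1 by blast
  then have "-1 \<le> u" "u \<le> 1" by (auto simp: abs_le_iff)
  moreover have "u = (r^2 - (a - c) * (l - c)) / (r * (a - l))"
    unfolding u_def d_def t_def by simp
  ultimately show "-1 \<le> (r^2 - (a - c) * (l - c)) / (r * (a - l))"
        "(r^2 - (a - c) * (l - c)) / (r * (a - l)) \<le> 1"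
    by auto
qed

lemma J_int:
  fixes a c r :: real
  assumes r: "r > 0" and dr: "\<bar>a - c\<bar> \<ge> r"
  shows "((\<lambda>l. Rf c r l / (a - l)) has_integral
           pi * ((a - c) - sgn (a - c) * sqrt ((a - c)^2 - r^2))) {c - r..c + r}"
proof -
  define d where "d = a - c"
  define S where "S = sqrt (d^2 - r^2)"
  define u where "u = (\<lambda>l. (r^2 - d * (l - c)) / (r * (a - l)))"
  define F where "F = (\<lambda>l. (if \<bar>d\<bar> > r then sgn d * S * arcsin (u l) else 0)
                       + d * arcsin ((l - c) / r) - Rf c r l)"
  have cont: "continuous_on {c - r..c + r} F"
  proof -
    have c1: "continuous_on {c - r..c + r} (\<lambda>l. arcsin ((l - c) / r))"
      using r by (intro continuous_intros) (auto simp: field_simps)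
    have c2: "continuous_on {c - r..c + r} (Rf c r)"
      unfolding Rf_def by (intro continuous_intros)
    have c3: "continuous_on {c - r..c + r} (\<lambda>l. arcsin (u l))" if "\<bar>d\<bar> > r"
    proof -
      have "\<forall>l\<in>{c - r..c + r}. a - l \<noteq> 0" using that by (auto simp: d_def)
      then have "continuous_on {c - r..c + r} u" unfolding u_def using r by (intro continuous_intros) auto
      then show ?thesis
        by (rule continuous_on_arcsin) (use u_bound[OF r that[unfolded d_def]] in \<open>auto simp: u_def d_def\<close>)
    qed
    show ?thesis unfolding F_def
      by (cases "\<bar>d\<bar> > r") (auto intro!: continuous_intros c1 c2 c3)
  qed
  have deriv: "(F has_real_derivative Rf c r l / (a - l)) (at l)" if l: "l \<in> {c - r<..<c + r}" for l
  proof -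
    have l1: "c - r < l" "l < c + r" using l by auto
    have Rpos: "Rf c r l > 0" using Rf_pos l1 by auto
    have R2: "(Rf c r l)^2 = r^2 - (l - c)^2" using Rf_sq2[of c r l] l1 by simp
    have anz: "a - l \<noteq> 0" using dr l1 by (auto simp: d_def)
    have R2': "Rf c r l * Rf c r l = r*r + 2*c*l - l*l - c*c" using R2 by (simp add: power2_eq_square algebra_simps)
    have base: "((\<lambda>l. d * arcsin ((l - c) / r) - Rf c r l) has_real_derivative
                 d * (1 / Rf c r l) - (c - l) / Rf c r l) (at l)"
      by (intro DERIV_diff DERIV_cmult D_asin[OF r l1] D_Rf[OF l1])
    show ?thesis
    proof (cases "\<bar>d\<bar> > r")
      case True
      have sgn2: "sgn d * sgn d = 1" using True r by (auto simp: sgn_if)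
      have "r^2 < \<bar>d\<bar>^2" using power_strict_mono[of r "\<bar>d\<bar>" 2] True r by simp
      then have S2: "S^2 = d^2 - r^2" unfolding S_def by simp
      have dk: "((\<lambda>l. arcsin (u l)) has_real_derivative - (sgn d * S) / ((a - l) * Rf c r l)) (at l)"
        using D_K[OF r True[unfolded d_def] l1] unfolding u_def S_def d_def .
      have "((\<lambda>l. sgn d * S * arcsin (u l) + (d * arcsin ((l - c) / r) - Rf c r l)) has_real_derivative
             sgn d * S * (- (sgn d * S) / ((a - l) * Rf c r l)) + (d * (1 / Rf c r l) - (c - l) / Rf c r l)) (at l)"
        by (rule DERIV_add[OF DERIV_cmult[OF dk] base])
      then show ?thesis
      proof (rule DERIV_cong_ev[THEN iffD1, rotated 3])
        show "\<forall>\<^sub>F x in nhds l. sgn d * S * arcsin (u x) + (d * arcsin ((x - c) / r) - Rf c r x) = F x"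
          using True by (simp add: F_def)
        have e1: "sgn d * S * (- (sgn d * S) / ((a - l) * Rf c r l)) = - (S^2) / ((a - l) * Rf c r l)"
          using sgn2 by (simp add: power2_eq_square algebra_simps)
        show "sgn d * S * (- (sgn d * S) / ((a - l) * Rf c r l)) + (d * (1 / Rf c r l) - (c - l) / Rf c r l)
              = Rf c r l / (a - l)"
          unfolding e1 S2 using Rpos anz
          by (simp add: divide_simps) (use R2' in \<open>simp add: d_def power2_eq_square algebra_simps\<close>)
      qed auto
    next
      case False
      then have dd: "d^2 = r^2" using dr by (simp add: d_def)
      have "(F has_real_derivative (d * (1 / Rf c r l) - (c - l) / Rf c r l)) (at l)"
        using base False unfolding F_def by simp
      moreover have "d * (1 / Rf c r l) - (c - l) / Rf c r l = Rf c r l / (a - l)"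
        using Rpos anz by (simp add: divide_simps) (use dd R2' in \<open>simp add: d_def power2_eq_square algebra_simps\<close>)
      ultimately show ?thesis by simp
    qed
  qed
  have "((\<lambda>l. Rf c r l / (a - l)) has_integral (F (c + r) - F (c - r))) {c - r..c + r}"
    using r by (intro fundamental_theorem_of_calculus_interior cont)
      (auto simp: has_real_derivative_iff_has_vector_derivative[symmetric] intro!: deriv)
  moreover have "F (c + r) - F (c - r) = pi * (d - sgn d * S)"
  proof (cases "\<bar>d\<bar> > r")
    case True
    have n1: "a - (c + r) \<noteq> 0" "a - (c - r) \<noteq> 0" using True r by (auto simp: d_def)
    have D: "r * (a - (c + r)) \<noteq> 0" "r * (a - (c - r)) \<noteq> 0" using n1 r by auto
    have "u (c + r) = (-(r * (a - (c + r)))) / (r * (a - (c + r)))"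
      unfolding u_def d_def by (simp add: power2_eq_square algebra_simps)
    moreover have "u (c - r) = (r * (a - (c - r))) / (r * (a - (c - r)))"
      unfolding u_def d_def by (simp add: power2_eq_square algebra_simps)
    ultimately have "u (c + r) = -1" "u (c - r) = 1" using D by simp_all
    then show ?thesis using True r by (simp add: F_def Rf_end algebra_simps)
  next
    case False
    then have "S = 0" using dr by (simp add: S_def d_def)
    then show ?thesis using False r by (simp add: F_def Rf_end algebra_simps)
  qed
  ultimately show ?thesis by (simp add: d_def S_def)
qed

lemma Rf_int:
  fixes c r :: real
  assumes r: "r > 0"
  shows "(Rf c r has_integral pi * r^2 / 2) {c - r..c + r}"
proof -
  define F where "F = (\<lambda>l. ((l - c) * Rf c r l + r^2 * arcsin ((l - c) / r)) / 2)"
  have cont: "continuous_on {c - r..c + r} F"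
    unfolding F_def Rf_def using r by (intro continuous_intros) (auto simp: field_simps)
  have deriv: "(F has_real_derivative Rf c r l) (at l)" if l: "l \<in> {c - r<..<c + r}" for l
  proof -
    have l1: "c - r < l" "l < c + r" using l by auto
    have Rpos: "Rf c r l > 0" using Rf_pos l1 by auto
    have R2: "(Rf c r l)^2 = r^2 - (l - c)^2" using Rf_sq2[of c r l] l1 by simp
    have R2': "Rf c r l * Rf c r l = r*r + 2*c*l - l*l - c*c" using R2 by (simp add: power2_eq_square algebra_simps)
    have d1: "((\<lambda>l. l - c) has_real_derivative 1) (at l)" by (auto intro!: derivative_eq_intros)
    have DX: "(F has_real_derivative ((1 * Rf c r l + (c - l) / Rf c r l * (l - c)) + r^2 * (1 / Rf c r l)) / 2) (at l)"
      unfolding F_def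
      by (rule DERIV_cdivide[OF DERIV_add[OF DERIV_mult[OF d1 D_Rf[OF l1]] DERIV_cmult[OF D_asin[OF r l1]]]])
    have EQ: "((1 * Rf c r l + (c - l) / Rf c r l * (l - c)) + r^2 * (1 / Rf c r l)) / 2 = Rf c r l"
      using Rpos by (simp add: divide_simps) (use R2' in \<open>simp add: power2_eq_square algebra_simps\<close>)
    show ?thesis using DX unfolding EQ .
  qed
  have "(Rf c r has_integral (F (c + r) - F (c - r))) {c - r..c + r}"
    using r by (intro fundamental_theorem_of_calculus_interior cont)
      (auto simp: has_real_derivative_iff_has_vector_derivative[symmetric] intro!: deriv)
  moreover have "F (c + r) - F (c - r) = pi * r^2 / 2"
    using r by (simp add: F_def Rf_end algebra_simps)
  ultimately show ?thesis by simp
qed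

lemma Rl2_int:
  fixes c r :: real
  assumes r: "r > 0" and cr: "c > r"
  shows "((\<lambda>l. Rf c r l / l^2) has_integral pi * (c / sqrt (c^2 - r^2) - 1)) {c - r..c + r}"
proof -
  define S where "S = sqrt (c^2 - r^2)"
  have "r^2 < c^2" using power_strict_mono[of r c 2] cr r by simp
  then have Spos: "S > 0" and S2: "S^2 = c^2 - r^2" unfolding S_def by auto
  define u where "u = (\<lambda>l. (r^2 - (0 - c) * (l - c)) / (r * (0 - l)))"
  define F where "F = (\<lambda>l. - (Rf c r l / l) - (c / S) * arcsin (u l) - arcsin ((l - c) / r))"
  have dr: "\<bar>0 - c\<bar> > r" using cr r by simp
  have cont: "continuous_on {c - r..c + r} F"
  proof -
    have c1: "continuous_on {c - r..c + r} (\<lambda>l. arcsin ((l - c) / r))"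
      using r by (intro continuous_intros) (auto simp: field_simps)
    have c2: "continuous_on {c - r..c + r} (\<lambda>l. Rf c r l / l)"
      unfolding Rf_def using cr by (intro continuous_intros) auto
    have "continuous_on {c - r..c + r} u" unfolding u_def using r cr by (intro continuous_intros) auto
    then have c3: "continuous_on {c - r..c + r} (\<lambda>l. arcsin (u l))"
      by (rule continuous_on_arcsin) (use u_bound[OF r dr] in \<open>auto simp: u_def\<close>)
    show ?thesis unfolding F_def by (intro continuous_intros c1 c2 c3)
  qed
  have deriv: "(F has_real_derivative Rf c r l / l^2) (at l)" if l: "l \<in> {c - r<..<c + r}" for l
  proof -
    have l1: "c - r < l" "l < c + r" using l by auto
    have lpos: "l > 0" using l1 cr by simp
    have Rpos: "Rf c r l > 0" using Rf_pos l1 by auto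
    have dk: "((\<lambda>l. arcsin (u l)) has_real_derivative - (sgn (0 - c) * S) / ((0 - l) * Rf c r l)) (at l)"
      using D_K[OF r dr l1] unfolding u_def S_def by simp
    have DX: "(F has_real_derivative
        - (((c - l) / Rf c r l * l - Rf c r l * 1) / (l * l)) - (c / S) * (- (sgn (0 - c) * S) / ((0 - l) * Rf c r l))
          - 1 / Rf c r l) (at l)"
      unfolding F_def
      by (rule DERIV_diff[OF DERIV_diff[OF DERIV_minus[OF DERIV_divide[OF D_Rf[OF l1] DERIV_ident]] DERIV_cmult[OF dk]] D_asin[OF r l1]])
        (use lpos in simp)
    have EQ: "- (((c - l) / Rf c r l * l - Rf c r l * 1) / (l * l)) - (c / S) * (- (sgn (0 - c) * S) / ((0 - l) * Rf c r l))
          - 1 / Rf c r l = Rf c r l / l^2"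
      using Rpos lpos Spos cr r by (simp add: divide_simps) (simp add: power2_eq_square algebra_simps)
    show ?thesis using DX unfolding EQ .
  qed
  have "((\<lambda>l. Rf c r l / l^2) has_integral (F (c + r) - F (c - r))) {c - r..c + r}"
    using r by (intro fundamental_theorem_of_calculus_interior cont)
      (auto simp: has_real_derivative_iff_has_vector_derivative[symmetric] intro!: deriv)
  moreover have "F (c + r) - F (c - r) = pi * (c / S - 1)"
  proof -
    have D: "r * (0 - (c + r)) \<noteq> 0" "r * (0 - (c - r)) \<noteq> 0" using cr r by auto
    have "u (c + r) = (-(r * (0 - (c + r)))) / (r * (0 - (c + r)))"
      unfolding u_def by (simp add: power2_eq_square algebra_simps)
    moreover have "u (c - r) = (r * (0 - (c - r))) / (r * (0 - (c - r)))"
      unfolding u_def by (simp add: power2_eq_square algebra_simps)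
    ultimately have "u (c + r) = -1" "u (c - r) = 1" using D by simp_all
    then show ?thesis using r by (simp add: F_def Rf_end algebra_simps)
  qed
  ultimately show ?thesis by (simp add: S_def)
qed



lemma leb_nonneg:
  fixes f :: "real \<Rightarrow> real"
  assumes hi: "(f has_integral I) {a..b}" and nn: "\<And>x. x \<in> {a..b} \<Longrightarrow> 0 \<le> f x"
    and [measurable]: "f \<in> borel_measurable borel"
  shows "integrable lborel (\<lambda>x. indicator {a..b} x * f x)"
        "integral\<^sup>L lborel (\<lambda>x. indicator {a..b} x * f x) = I"
proof -
  have ai: "f absolutely_integrable_on {a..b}"
    using nonnegative_absolutely_integrable_1[of f "{a..b}"] hi nn by (auto simp: integrable_on_def)
  then have il: "integrable lebesgue (\<lambda>x. indicator {a..b} x * f x)" by (simp add: set_integrable_def)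
  have m: "(\<lambda>x. indicator {a..b} x * f x) \<in> borel_measurable lborel" by measurable
  show "integrable lborel (\<lambda>x. indicator {a..b} x * f x)"
    using il integrable_completion[OF m] by simp
  have "(LINT x:{a..b}|lebesgue. f x) = integral {a..b} f"
    by (rule set_lebesgue_integral_eq_integral(2)[OF ai])
  also have "\<dots> = I" using hi by (rule integral_unique)
  finally show "integral\<^sup>L lborel (\<lambda>x. indicator {a..b} x * f x) = I"
    using integral_completion[OF m] by (simp add: set_lebesgue_integral_def)
qed

lemma leb_nonpos:
  fixes f :: "real \<Rightarrow> real"
  assumes hi: "(f has_integral I) {a..b}" and nn: "\<And>x. x \<in> {a..b} \<Longrightarrow> f x \<le> 0"
    and [measurable]: "f \<in> borel_measurable borel"
  shows "integrable lborel (\<lambda>x. indicator {a..b} x * f x)"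
        "integral\<^sup>L lborel (\<lambda>x. indicator {a..b} x * f x) = I"
proof -
  have hi': "((\<lambda>x. - f x) has_integral - I) {a..b}" using has_integral_neg[OF hi] by simp
  have "integrable lborel (\<lambda>x. indicator {a..b} x * (- f x))"
       "integral\<^sup>L lborel (\<lambda>x. indicator {a..b} x * (- f x)) = - I"
    using leb_nonneg[OF hi'] nn by auto
  note h = this
  show "integrable lborel (\<lambda>x. indicator {a..b} x * f x)"
    using integrable_minus[OF h(1)] by simp
  show "integral\<^sup>L lborel (\<lambda>x. indicator {a..b} x * f x) = I"
    using h(2) integral_minus[of lborel "\<lambda>x. indicator {a..b} x * f x"] by simp
qed

lemma Rf_meas[measurable]: "Rf c r \<in> borel_measurable borel"
  unfolding Rf_def by measurable

lemma Rf_nonneg: "l \<in> {c - r..c + r} \<Longrightarrow> 0 \<le> Rf c r l" by (simp add: Rf_def)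

lemma P_a:
  fixes a c r :: real
  assumes r: "r > 0" and dr: "\<bar>a - c\<bar> \<ge> r"
  shows "integrable lborel (\<lambda>l. indicator {c - r..c + r} l * (Rf c r l / (a - l)))"
        "integral\<^sup>L lborel (\<lambda>l. indicator {c - r..c + r} l * (Rf c r l / (a - l)))
           = pi * ((a - c) - sgn (a - c) * sqrt ((a - c)^2 - r^2))"
proof -
  have m: "(\<lambda>l. Rf c r l / (a - l)) \<in> borel_measurable borel" by measurable
  have "a \<ge> c + r \<or> a \<le> c - r" using dr by auto
  then have "integrable lborel (\<lambda>l. indicator {c - r..c + r} l * (Rf c r l / (a - l))) \<and>
        integral\<^sup>L lborel (\<lambda>l. indicator {c - r..c + r} l * (Rf c r l / (a - l)))
           = pi * ((a - c) - sgn (a - c) * sqrt ((a - c)^2 - r^2))"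
  proof
    assume "a \<ge> c + r"
    then have "\<And>x. x \<in> {c - r..c + r} \<Longrightarrow> 0 \<le> Rf c r x / (a - x)"
      using Rf_nonneg by (auto intro!: divide_nonneg_nonneg)
    then show ?thesis using leb_nonneg[OF J_int[OF r dr] _ m] by auto
  next
    assume "a \<le> c - r"
    then have "\<And>x. x \<in> {c - r..c + r} \<Longrightarrow> Rf c r x / (a - x) \<le> 0"
      using Rf_nonneg by (auto intro!: divide_nonneg_nonpos)
    then show ?thesis using leb_nonpos[OF J_int[OF r dr] _ m] by auto
  qed
  then show "integrable lborel (\<lambda>l. indicator {c - r..c + r} l * (Rf c r l / (a - l)))"
        "integral\<^sup>L lborel (\<lambda>l. indicator {c - r..c + r} l * (Rf c r l / (a - l)))
           = pi * ((a - c) - sgn (a - c) * sqrt ((a - c)^2 - r^2))" by auto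
qed

lemma P_R:
  fixes c r :: real
  assumes r: "r > 0"
  shows "integrable lborel (\<lambda>l. indicator {c - r..c + r} l * Rf c r l)"
        "integral\<^sup>L lborel (\<lambda>l. indicator {c - r..c + r} l * Rf c r l) = pi * r^2 / 2"
  using leb_nonneg[OF Rf_int[OF r] Rf_nonneg Rf_meas] by auto

lemma P_l2:
  fixes c r :: real
  assumes r: "r > 0" and cr: "c > r"
  shows "integrable lborel (\<lambda>l. indicator {c - r..c + r} l * (Rf c r l / l^2))"
        "integral\<^sup>L lborel (\<lambda>l. indicator {c - r..c + r} l * (Rf c r l / l^2)) = pi * (c / sqrt (c^2 - r^2) - 1)"
proof -
  have m: "(\<lambda>l. Rf c r l / l^2) \<in> borel_measurable borel" by measurable
  show "integrable lborel (\<lambda>l. indicator {c - r..c + r} l * (Rf c r l / l^2))"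
        "integral\<^sup>L lborel (\<lambda>l. indicator {c - r..c + r} l * (Rf c r l / l^2)) = pi * (c / sqrt (c^2 - r^2) - 1)"
    using leb_nonneg[OF Rl2_int[OF r cr] _ m] Rf_nonneg by (auto intro!: divide_nonneg_nonneg)
qed



lemma int_mu:
  assumes b: "\<beta> > 0" and [measurable]: "f \<in> borel_measurable borel"
    and fi: "integrable lborel (\<lambda>l. mp_density \<beta> l * f l)"
  shows "integrable (mp_measure \<beta>) f"
        "integral\<^sup>L (mp_measure \<beta>) f = c0 \<beta> * f 0 + integral\<^sup>L lborel (\<lambda>l. mp_density \<beta> l * f l)"
proof -
  have hm: "hfun \<in> measurable (density lborel (gfun \<beta>)) borel" by simp
  have gnn: "AE l in lborel. 0 \<le> gfun \<beta> l" using gfun_nonneg[OF b] by simp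
  have pw: "gfun \<beta> l *\<^sub>R f (hfun l) = mp_density \<beta> l * f l + (c0 \<beta> * f 0) * indicator {-2..-1} l" for l
  proof (cases "l \<in> {-2..-1}")
    case True
    then have "mp_density \<beta> l = 0" using lam_minus_nonneg[of \<beta>] by (intro mp_density_zero) auto
    then show ?thesis using True by (simp add: gfun_def hfun_def)
  next
    case False
    then show ?thesis by (auto simp: gfun_def hfun_def)
  qed
  have ii: "integrable lborel (\<lambda>l. (c0 \<beta> * f 0) * indicator {-2..-1::real} l)"
    by (intro integrable_mult_right integrable_real_indicator) auto
  have i2: "integrable lborel (\<lambda>l. gfun \<beta> l *\<^sub>R f (hfun l))"
    unfolding pw by (rule Bochner_Integration.integrable_add[OF fi ii])
  show "integrable (mp_measure \<beta>) f"
    unfolding mp_measure_eq[OF b] NN_def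
    using i2 by (simp add: integrable_distr_eq[OF hm] integrable_density[OF _ _ gnn])
  have "integral\<^sup>L (mp_measure \<beta>) f = integral\<^sup>L lborel (\<lambda>l. gfun \<beta> l *\<^sub>R f (hfun l))"
    unfolding mp_measure_eq[OF b] NN_def
    by (simp add: integral_distr[OF hm] integral_density[OF _ _ gnn])
  also have "\<dots> = integral\<^sup>L lborel (\<lambda>l. mp_density \<beta> l * f l) + (c0 \<beta> * f 0) * measure lborel {-2..-1::real}"
    unfolding pw using fi ii by (simp add: integral_add)
  finally show "integral\<^sup>L (mp_measure \<beta>) f = c0 \<beta> * f 0 + integral\<^sup>L lborel (\<lambda>l. mp_density \<beta> l * f l)"
    by simp
qed

lemma lm_eq: "\<beta> \<ge> 0 \<Longrightarrow> lam_minus \<beta> = (1 + \<beta>) - 2 * sqrt \<beta>"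
  by (simp add: lam_minus_def power2_eq_square algebra_simps)
lemma lp_eq: "\<beta> \<ge> 0 \<Longrightarrow> lam_plus \<beta> = (1 + \<beta>) + 2 * sqrt \<beta>"
  by (simp add: lam_plus_def power2_eq_square algebra_simps)

lemma dens_eq:
  assumes b: "\<beta> > 0"
  shows "mp_density \<beta> l = indicator {(1 + \<beta>) - 2 * sqrt \<beta>..(1 + \<beta>) + 2 * sqrt \<beta>} l
            * (Rf (1 + \<beta>) (2 * sqrt \<beta>) l / (2 * pi * \<beta> * l))"
proof (cases "l \<in> {(1 + \<beta>) - 2 * sqrt \<beta>..(1 + \<beta>) + 2 * sqrt \<beta>}")
  case True
  then show ?thesis using b by (simp add: mp_density_def Rf_def lm_eq lp_eq)
next
  case False
  then have "l \<le> lam_minus \<beta> \<or> l \<ge> lam_plus \<beta>" using b by (auto simp: lm_eq lp_eq)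
  then show ?thesis using False by (simp add: mp_density_zero)
qed

lemma cr_sq: "\<beta> \<ge> 0 \<Longrightarrow> (1 + \<beta>)^2 - (2 * sqrt \<beta>)^2 = (1 - \<beta>)^2"
  by (simp add: power2_eq_square algebra_simps)

lemma c_ge_r: "\<beta> \<ge> 0 \<Longrightarrow> 1 + \<beta> \<ge> 2 * sqrt \<beta>"
proof -
  assume "\<beta> \<ge> 0"
  have "0 \<le> (1 - sqrt \<beta>)^2" by simp
  then show ?thesis using \<open>\<beta> \<ge> 0\<close> by (simp add: power2_eq_square algebra_simps)
qed

lemma c_gt_r: "\<beta> > 0 \<Longrightarrow> \<beta> \<noteq> 1 \<Longrightarrow> 1 + \<beta> > 2 * sqrt \<beta>"
proof -
  assume b: "\<beta> > 0" "\<beta> \<noteq> 1"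
  have "sqrt \<beta> \<noteq> 1" using b by auto
  then have "0 < (1 - sqrt \<beta>)^2" by simp
  then show ?thesis using b by (simp add: power2_eq_square algebra_simps)
qed

lemma F1:
  assumes b: "\<beta> > 0"
  shows "integrable lborel (mp_density \<beta>)" "integral\<^sup>L lborel (mp_density \<beta>) = 1 - c0 \<beta>"
proof -
  define c where "c = 1 + \<beta>"
  define r where "r = 2 * sqrt \<beta>"
  have r: "r > 0" using b by (simp add: r_def)
  have dr: "\<bar>0 - c\<bar> \<ge> r" using c_ge_r[of \<beta>] b by (simp add: c_def r_def)
  note P = P_a[OF r dr]
  have eq: "mp_density \<beta> = (\<lambda>l. (- 1 / (2 * pi * \<beta>)) * (indicator {c - r..c + r} l * (Rf c r l / (0 - l))))"
    using b by (auto simp: dens_eq c_def r_def fun_eq_iff)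
  show "integrable lborel (mp_density \<beta>)" unfolding eq by (intro integrable_mult_right P(1))
  have "(0 - c)^2 = (1 + \<beta>)^2" by (simp add: c_def power2_eq_square algebra_simps)
  then have sq: "sqrt ((0 - c)^2 - r^2) = \<bar>1 - \<beta>\<bar>"
    using cr_sq[of \<beta>] b by (simp add: r_def)
  have "integral\<^sup>L lborel (mp_density \<beta>) = (- 1 / (2 * pi * \<beta>)) * (pi * ((0 - c) - sgn (0 - c) * \<bar>1 - \<beta>\<bar>))"
    unfolding eq integral_mult_right_zero P(2) sq ..
  also have "\<dots> = 1 - c0 \<beta>"
    using b by (cases "\<beta> \<ge> 1") (auto simp: c_def c0_def sgn_if field_simps)
  finally show "integral\<^sup>L lborel (mp_density \<beta>) = 1 - c0 \<beta>" .
qed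

lemma FR:
  assumes b: "\<beta> > 0"
  shows "integrable lborel (\<lambda>l. mp_density \<beta> l * l)" "integral\<^sup>L lborel (\<lambda>l. mp_density \<beta> l * l) = 1"
proof -
  define c where "c = 1 + \<beta>"
  define r where "r = 2 * sqrt \<beta>"
  have r: "r > 0" using b by (simp add: r_def)
  note P = P_R[OF r, of c]
  have ae: "AE l in lborel. mp_density \<beta> l * l = (1 / (2 * pi * \<beta>)) * (indicator {c - r..c + r} l * Rf c r l)"
    using AE_lborel_singleton[of 0] by eventually_elim (use b in \<open>auto simp: dens_eq c_def r_def\<close>)
  have m1: "(\<lambda>l. mp_density \<beta> l * l) \<in> borel_measurable lborel" by measurable
  have m2: "(\<lambda>l. (1 / (2 * pi * \<beta>)) * (indicator {c - r..c + r} l * Rf c r l)) \<in> borel_measurable lborel"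
    by measurable
  show "integrable lborel (\<lambda>l. mp_density \<beta> l * l)"
    using integrable_cong_AE[OF m1 m2 ae] P(1) by simp
  have "integral\<^sup>L lborel (\<lambda>l. mp_density \<beta> l * l) = (1 / (2 * pi * \<beta>)) * (pi * r^2 / 2)"
    using integral_cong_AE[OF m1 m2 ae] P(2) by simp
  also have "\<dots> = 1" using b by (simp add: r_def power_mult_distrib)
  finally show "integral\<^sup>L lborel (\<lambda>l. mp_density \<beta> l * l) = 1" .
qed

lemma Fw:
  assumes b: "\<beta> > 0" and w0: "w \<noteq> 0" and dr: "\<bar>w - (1 + \<beta>)\<bar> \<ge> 2 * sqrt \<beta>"
  shows "integrable lborel (\<lambda>l. mp_density \<beta> l / (w - l))"
        "integral\<^sup>L lborel (\<lambda>l. mp_density \<beta> l / (w - l)) =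
           ((1 + \<beta>) - \<bar>1 - \<beta>\<bar> + ((w - (1 + \<beta>)) - sgn (w - (1 + \<beta>)) * sqrt ((w - (1 + \<beta>))^2 - 4 * \<beta>))) / (2 * \<beta> * w)"
proof -
  define c where "c = 1 + \<beta>"
  define r where "r = 2 * sqrt \<beta>"
  have r: "r > 0" using b by (simp add: r_def)
  have dr0: "\<bar>0 - c\<bar> \<ge> r" using c_ge_r[of \<beta>] b by (simp add: c_def r_def)
  have drw: "\<bar>w - c\<bar> \<ge> r" using dr by (simp add: c_def r_def)
  note P0 = P_a[OF r dr0] and Pw = P_a[OF r drw]
  define K where "K = 1 / (2 * pi * \<beta> * w)"
  have ae: "AE l in lborel. mp_density \<beta> l / (w - l) =
      K * (- (indicator {c - r..c + r} l * (Rf c r l / (0 - l))) + indicator {c - r..c + r} l * (Rf c r l / (w - l)))"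
    using AE_lborel_singleton[of 0] AE_lborel_singleton[of w]
  proof eventually_elim
    case (elim l)
    then have "w - l \<noteq> 0" by simp
    with elim show ?case using b w0
      by (simp add: dens_eq K_def c_def r_def indicator_def divide_simps) (simp add: algebra_simps)
  qed
  have m1: "(\<lambda>l. mp_density \<beta> l / (w - l)) \<in> borel_measurable lborel" by measurable
  have m2: "(\<lambda>l. K * (- (indicator {c - r..c + r} l * (Rf c r l / (0 - l))) + indicator {c - r..c + r} l * (Rf c r l / (w - l)))) \<in> borel_measurable lborel"
    by measurable
  have i2: "integrable lborel (\<lambda>l. K * (- (indicator {c - r..c + r} l * (Rf c r l / (0 - l))) + indicator {c - r..c + r} l * (Rf c r l / (w - l))))"
    by (intro integrable_mult_right Bochner_Integration.integrable_add integrable_minus P0(1) Pw(1))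
  show "integrable lborel (\<lambda>l. mp_density \<beta> l / (w - l))"
    using integrable_cong_AE[OF m1 m2 ae] i2 by simp
  have "(0 - c)^2 = (1 + \<beta>)^2" by (simp add: c_def power2_eq_square algebra_simps)
  then have sq: "sqrt ((0 - c)^2 - r^2) = \<bar>1 - \<beta>\<bar>"
    using cr_sq[of \<beta>] b by (simp add: r_def c_def)
  have r2: "r^2 = 4 * \<beta>" using b by (simp add: r_def power_mult_distrib)
  have "integral\<^sup>L lborel (\<lambda>l. mp_density \<beta> l / (w - l)) =
      K * (- (pi * ((0 - c) - sgn (0 - c) * \<bar>1 - \<beta>\<bar>)) + pi * ((w - c) - sgn (w - c) * sqrt ((w - c)^2 - r^2)))"
    unfolding integral_cong_AE[OF m1 m2 ae] integral_mult_right_zero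
      Bochner_Integration.integral_add[OF integrable_minus[OF P0(1)] Pw(1)] integral_minus P0(2) Pw(2) sq ..
  also have "\<dots> = ((1 + \<beta>) - \<bar>1 - \<beta>\<bar> + ((w - (1 + \<beta>)) - sgn (w - (1 + \<beta>)) * sqrt ((w - (1 + \<beta>))^2 - 4 * \<beta>))) / (2 * \<beta> * w)"
    using b w0 unfolding r2 by (simp add: K_def c_def sgn_if field_simps)
  finally show "integral\<^sup>L lborel (\<lambda>l. mp_density \<beta> l / (w - l)) =
           ((1 + \<beta>) - \<bar>1 - \<beta>\<bar> + ((w - (1 + \<beta>)) - sgn (w - (1 + \<beta>)) * sqrt ((w - (1 + \<beta>))^2 - 4 * \<beta>))) / (2 * \<beta> * w)" .
qed

lemma Fl:
  assumes b: "\<beta> > 0" and b1: "\<beta> \<noteq> 1"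
  shows "integrable lborel (\<lambda>l. mp_density \<beta> l / l)"
        "integral\<^sup>L lborel (\<lambda>l. mp_density \<beta> l / l) = ((1 + \<beta>) / \<bar>1 - \<beta>\<bar> - 1) / (2 * \<beta>)"
proof -
  define c where "c = 1 + \<beta>"
  define r where "r = 2 * sqrt \<beta>"
  have r: "r > 0" using b by (simp add: r_def)
  have cr: "c > r" using c_gt_r[OF b b1] by (simp add: c_def r_def)
  note P = P_l2[OF r cr]
  have ae: "AE l in lborel. mp_density \<beta> l / l = (1 / (2 * pi * \<beta>)) * (indicator {c - r..c + r} l * (Rf c r l / l^2))"
    using AE_lborel_singleton[of 0] by eventually_elim (use b in \<open>auto simp: dens_eq c_def r_def power2_eq_square\<close>)
  have m1: "(\<lambda>l. mp_density \<beta> l / l) \<in> borel_measurable lborel" by measurable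
  have m2: "(\<lambda>l. (1 / (2 * pi * \<beta>)) * (indicator {c - r..c + r} l * (Rf c r l / l^2))) \<in> borel_measurable lborel"
    by measurable
  show "integrable lborel (\<lambda>l. mp_density \<beta> l / l)"
    by (subst integrable_cong_AE[OF m1 m2 ae]) (intro integrable_mult_right P(1))
  have sq: "sqrt (c^2 - r^2) = \<bar>1 - \<beta>\<bar>"
    using cr_sq[of \<beta>] b by (simp add: r_def c_def)
  have "integral\<^sup>L lborel (\<lambda>l. mp_density \<beta> l / l) = (1 / (2 * pi * \<beta>)) * (pi * (c / \<bar>1 - \<beta>\<bar> - 1))"
    unfolding integral_cong_AE[OF m1 m2 ae] integral_mult_right_zero P(2) sq ..
  also have "\<dots> = ((1 + \<beta>) / \<bar>1 - \<beta>\<bar> - 1) / (2 * \<beta>)"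
    using b by (simp add: c_def)
  finally show "integral\<^sup>L lborel (\<lambda>l. mp_density \<beta> l / l) = ((1 + \<beta>) / \<bar>1 - \<beta>\<bar> - 1) / (2 * \<beta>)" .
qed



lemma mu_prob:
  assumes b: "\<beta> > 0"
  shows "finite_measure (mp_measure \<beta>)" "emeasure (mp_measure \<beta>) UNIV = 1"
proof -
  have i1: "integrable lborel (\<lambda>l. mp_density \<beta> l * 1)" using F1(1)[OF b] by simp
  note I = int_mu[OF b _ i1]
  have int1: "integrable (mp_measure \<beta>) (\<lambda>_. 1::real)" using I(1) by simp
  have "integral\<^sup>L (mp_measure \<beta>) (\<lambda>_. 1::real) = 1" using I(2) F1(2)[OF b] by simp
  then have m1: "measure (mp_measure \<beta>) (space (mp_measure \<beta>)) = 1" by simp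
  have "(\<integral>\<^sup>+ x. ennreal (norm (1::real)) \<partial>mp_measure \<beta>) < \<infinity>"
    using int1 by (simp add: integrable_iff_bounded)
  then have fin: "emeasure (mp_measure \<beta>) (space (mp_measure \<beta>)) < \<infinity>" by simp
  then show fm: "finite_measure (mp_measure \<beta>)" by (intro finite_measureI) simp
  interpret finite_measure "mp_measure \<beta>" by (rule fm)
  have sp: "space (mp_measure \<beta>) = UNIV" by (simp add: mp_measure_eq[OF b] NN_def)
  show "emeasure (mp_measure \<beta>) UNIV = 1" using m1 emeasure_eq_measure[of UNIV] sp by simp
qed

lemma mu_singleton:
  assumes b: "\<beta> > 0" and x: "x \<noteq> 0"
  shows "emeasure (mp_measure \<beta>) {x} = 0"
proof -
  have "(\<integral>\<^sup>+ l. ennreal (mp_density \<beta> l) * indicator {x} l \<partial>lborel)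
      = (\<integral>\<^sup>+ l. ennreal (mp_density \<beta> x) * indicator {x} l \<partial>lborel)"
    by (intro nn_integral_cong) (simp split: split_indicator)
  also have "\<dots> = 0" by simp
  finally show ?thesis using x by (simp add: mp_measure_eq[OF b] emeasure_NN[OF b])
qed

lemma AE_mu:
  assumes b: "\<beta> > 0"
    and P: "\<And>l. lam_minus \<beta> < l \<Longrightarrow> l < lam_plus \<beta> \<Longrightarrow> P l"
    and P0: "c0 \<beta> > 0 \<Longrightarrow> P 0"
  shows "AE l in mp_measure \<beta>. P l"
proof -
  define N where "N = ({..lam_minus \<beta>} \<union> {lam_plus \<beta>..}) - (if c0 \<beta> > 0 then {0} else {})"
  have Nb: "N \<in> sets borel" unfolding N_def by auto
  have sub: "{l \<in> space (mp_measure \<beta>). \<not> P l} \<subseteq> N"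
    using P P0 by (force simp: N_def not_less)
  have "\<And>l. ennreal (mp_density \<beta> l) * indicator N l = 0"
    by (auto simp: N_def mp_density_zero split: split_indicator if_splits)
  then have "(\<integral>\<^sup>+ l. ennreal (mp_density \<beta> l) * indicator N l \<partial>lborel) = (\<integral>\<^sup>+ l. 0 \<partial>(lborel::real measure))"
    by (intro nn_integral_cong) simp
  then have "(\<integral>\<^sup>+ l. ennreal (mp_density \<beta> l) * indicator N l \<partial>lborel) = 0" by simp
  moreover have "ennreal (c0 \<beta>) * indicator N 0 = 0"
    using c0_nonneg[of \<beta>] by (auto simp: N_def split: split_indicator)
  ultimately have "emeasure (mp_measure \<beta>) N = 0"
    by (simp add: mp_measure_eq[OF b] emeasure_NN[OF b Nb])
  then have "N \<in> null_sets (mp_measure \<beta>)"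
    using Nb by (simp add: null_sets_def mp_measure_eq[OF b] NN_def)
  then show ?thesis using sub by (rule AE_I')
qed



lemma ln_abs_bound: "(v::real) > 0 \<Longrightarrow> \<bar>ln v\<bar> \<le> v + 1 / v"
proof -
  assume v: "v > 0"
  have "ln v \<le> v - 1" using ln_le_minus_one v by simp
  moreover have "ln (1 / v) \<le> 1 / v - 1" using ln_le_minus_one v by simp
  moreover have "ln (1 / v) = - ln v" using v by (simp add: ln_div)
  moreover have "1 / v > 0" using v by simp
  ultimately show ?thesis using v unfolding abs_le_iff by linarith
qed

lemma ln_strict: "(u::real) > 0 \<Longrightarrow> u \<noteq> 1 \<Longrightarrow> ln u < u - 1"
proof -
  assume u: "u > 0" "u \<noteq> 1"
  define s where "s = sqrt u"
  have s: "s > 0" "s \<noteq> 1" "s * s = u" using u by (auto simp: s_def)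
  have "ln u = 2 * ln s" using s by (simp add: ln_mult flip: s(3))
  also have "\<dots> \<le> 2 * (s - 1)" using ln_le_minus_one[OF s(1)] by simp
  also have "\<dots> < u - 1"
  proof -
    have "0 < (s - 1)^2" using s by simp
    then have "0 < (s - 1) * (s - 1)" by (simp add: power2_eq_square)
    then show ?thesis using s(3) by (simp add: algebra_simps)
  qed
  finally show ?thesis .
qed

lemma mu_int_basic:
  assumes b: "\<beta> > 0"
  shows "integrable (mp_measure \<beta>) (\<lambda>l. l)" "integrable (mp_measure \<beta>) (\<lambda>l. 1::real)"
        "integral\<^sup>L (mp_measure \<beta>) (\<lambda>l. l) = 1" "integral\<^sup>L (mp_measure \<beta>) (\<lambda>l. 1::real) = 1"
proof -
  show "integrable (mp_measure \<beta>) (\<lambda>l. l)" using int_mu(1)[OF b _ FR(1)[OF b]] by simp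
  show "integral\<^sup>L (mp_measure \<beta>) (\<lambda>l. l) = 1" using int_mu(2)[OF b _ FR(1)[OF b]] FR(2)[OF b] by simp
  have i1: "integrable lborel (\<lambda>l. mp_density \<beta> l * 1)" using F1(1)[OF b] by simp
  show "integrable (mp_measure \<beta>) (\<lambda>l. 1::real)" using int_mu(1)[OF b _ i1] by simp
  show "integral\<^sup>L (mp_measure \<beta>) (\<lambda>l. 1::real) = 1" using int_mu(2)[OF b _ i1] F1(2)[OF b] by simp
qed

lemma ln_int:
  assumes b: "\<beta> > 0"
    and ae: "AE l in mp_measure \<beta>. 1 - a * (l - x) > 0"
    and ii: "integrable (mp_measure \<beta>) (\<lambda>l. 1 / (1 - a * (l - x)))"
  shows "integrable (mp_measure \<beta>) (\<lambda>l. ln (1 - a * (l - x)))"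
proof -
  note B = mu_int_basic[OF b]
  have c: "integrable (mp_measure \<beta>) (\<lambda>l. k)" for k :: real
    using Bochner_Integration.integrable_mult_right[of k "mp_measure \<beta>" "\<lambda>l. 1"] B(2) by simp
  have ip: "integrable (mp_measure \<beta>) (\<lambda>l. 1 - a * (l - x))"
    by (rule Bochner_Integration.integrable_diff[OF c[of 1] Bochner_Integration.integrable_mult_right[OF Bochner_Integration.integrable_diff[OF B(1) c[of x]]]])
  have isum: "integrable (mp_measure \<beta>) (\<lambda>l. (1 - a * (l - x)) + 1 / (1 - a * (l - x)))"
    by (rule Bochner_Integration.integrable_add[OF ip ii])
  have m: "(\<lambda>l. ln (1 - a * (l - x))) \<in> borel_measurable (mp_measure \<beta>)"
    by (simp add: mp_measure_eq[OF b] NN_def)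
  show ?thesis
  proof (rule Bochner_Integration.integrable_bound[OF isum m])
    show "AE l in mp_measure \<beta>. norm (ln (1 - a * (l - x))) \<le> norm ((1 - a * (l - x)) + 1 / (1 - a * (l - x)))"
      using ae
    proof eventually_elim
      case (elim l)
      have "\<bar>ln (1 - a * (l - x))\<bar> \<le> (1 - a * (l - x)) + 1 / (1 - a * (l - x))"
        using elim by (rule ln_abs_bound)
      then show ?case unfolding real_norm_def by (metis abs_ge_self order_trans)
    qed
  qed
qed

lemma key:
  fixes \<beta> x a0 as :: real
  assumes b: "\<beta> > 0" and x0: "x \<noteq> 0"
   and ae0: "AE l in mp_measure \<beta>. 1 - a0 * (l - x) > 0"
   and aes: "AE l in mp_measure \<beta>. 1 - as * (l - x) > 0"
   and il0: "integrable (mp_measure \<beta>) (\<lambda>l. ln (1 - a0 * (l - x)))"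
   and ils: "integrable (mp_measure \<beta>) (\<lambda>l. ln (1 - as * (l - x)))"
   and iq: "integrable (mp_measure \<beta>) (\<lambda>l. (l - x) / (1 - a0 * (l - x)))"
   and sg: "(a0 - as) * integral\<^sup>L (mp_measure \<beta>) (\<lambda>l. (l - x) / (1 - a0 * (l - x))) \<le> 0"
   and ne: "as \<noteq> a0"
  shows "integral\<^sup>L (mp_measure \<beta>) (\<lambda>l. ln (1 - as * (l - x)))
       < integral\<^sup>L (mp_measure \<beta>) (\<lambda>l. ln (1 - a0 * (l - x)))"
proof -
  interpret finite_measure "mp_measure \<beta>" by (rule mu_prob(1)[OF b])
  have sp: "space (mp_measure \<beta>) = UNIV" by (simp add: mp_measure_eq[OF b] NN_def)
  have aex: "AE l in mp_measure \<beta>. l \<noteq> x"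
  proof (rule AE_I')
    show "{x} \<in> null_sets (mp_measure \<beta>)"
      using mu_singleton[OF b x0] by (simp add: null_sets_def mp_measure_eq[OF b] NN_def)
  qed auto
  define X where "X = (\<lambda>l. ln (1 - as * (l - x)) - ln (1 - a0 * (l - x)))"
  define Y where "Y = (\<lambda>l. (a0 - as) * ((l - x) / (1 - a0 * (l - x))))"
  have "integral\<^sup>L (mp_measure \<beta>) X < integral\<^sup>L (mp_measure \<beta>) Y"
  proof (rule integral_less_AE[where A = UNIV])
    show "integrable (mp_measure \<beta>) X" unfolding X_def using ils il0 by simp
    show "integrable (mp_measure \<beta>) Y" unfolding Y_def by (intro integrable_mult_right iq)
    show "emeasure (mp_measure \<beta>) UNIV \<noteq> 0" using mu_prob(2)[OF b] by simp
    show "UNIV \<in> sets (mp_measure \<beta>)" using sp sets.top[of "mp_measure \<beta>"] by simp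
    show "AE l in mp_measure \<beta>. l \<in> UNIV \<longrightarrow> X l \<noteq> Y l"
      using ae0 aes aex
    proof eventually_elim
      case (elim l)
      define u where "u = (1 - as * (l - x)) / (1 - a0 * (l - x))"
      have u0: "u > 0" using elim by (simp add: u_def)
      have "u \<noteq> 1"
      proof
        assume "u = 1"
        then have "1 - as * (l - x) = 1 - a0 * (l - x)" using elim by (simp add: u_def)
        then have "(as - a0) * (l - x) = 0" by (simp add: algebra_simps)
        then show False using ne elim by simp
      qed
      then have "ln u < u - 1" using ln_strict u0 by simp
      moreover have "X l = ln u" using elim by (simp add: X_def u_def ln_div)
      moreover have "Y l = u - 1" using elim by (simp add: Y_def u_def divide_simps) (simp add: algebra_simps)
      ultimately show ?case by simp
    qed
    show "AE l in mp_measure \<beta>. X l \<le> Y l"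
      using ae0 aes
    proof eventually_elim
      case (elim l)
      define u where "u = (1 - as * (l - x)) / (1 - a0 * (l - x))"
      have u0: "u > 0" using elim by (simp add: u_def)
      have "ln u \<le> u - 1" using ln_le_minus_one u0 by simp
      moreover have "X l = ln u" using elim by (simp add: X_def u_def ln_div)
      moreover have "Y l = u - 1" using elim by (simp add: Y_def u_def divide_simps) (simp add: algebra_simps)
      ultimately show ?case by simp
    qed
  qed
  moreover have "integral\<^sup>L (mp_measure \<beta>) X = integral\<^sup>L (mp_measure \<beta>) (\<lambda>l. ln (1 - as * (l - x)))
       - integral\<^sup>L (mp_measure \<beta>) (\<lambda>l. ln (1 - a0 * (l - x)))"
    unfolding X_def using ils il0 by (rule Bochner_Integration.integral_diff)
  moreover have "integral\<^sup>L (mp_measure \<beta>) Y = (a0 - as) * integral\<^sup>L (mp_measure \<beta>) (\<lambda>l. (l - x) / (1 - a0 * (l - x)))"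
    unfolding Y_def by (rule integral_mult_right_zero)
  ultimately show ?thesis using sg by linarith
qed



lemma Gw:
  assumes b: "\<beta> > 0" and a0: "a \<noteq> 0" and w0: "x + 1 / a \<noteq> 0"
    and dr: "\<bar>(x + 1 / a) - (1 + \<beta>)\<bar> \<ge> 2 * sqrt \<beta>"
  shows "integrable (mp_measure \<beta>) (\<lambda>l. 1 / (1 - a * (l - x)))"
        "integrable (mp_measure \<beta>) (\<lambda>l. (l - x) / (1 - a * (l - x)))"
        "integral\<^sup>L (mp_measure \<beta>) (\<lambda>l. (l - x) / (1 - a * (l - x))) =
           c0 \<beta> * ((0 - x) / (1 - a * (0 - x)))
           + ((1 / a^2) * integral\<^sup>L lborel (\<lambda>l. mp_density \<beta> l / ((x + 1 / a) - l)) - (1 / a) * (1 - c0 \<beta>))"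
proof -
  define w where "w = x + 1 / a"
  have pw: "1 - a * (l - x) = a * (w - l)" for l using a0 by (simp add: w_def algebra_simps)
  note FW = Fw[OF b w0[folded w_def] dr[folded w_def]]
  note FF = F1[OF b]
  have e1: "(\<lambda>l. mp_density \<beta> l * (1 / (1 - a * (l - x)))) = (\<lambda>l. (1 / a) * (mp_density \<beta> l / (w - l)))"
    by (simp add: pw fun_eq_iff)
  have i1: "integrable lborel (\<lambda>l. mp_density \<beta> l * (1 / (1 - a * (l - x))))"
    unfolding e1 by (intro integrable_mult_right FW(1))
  show "integrable (mp_measure \<beta>) (\<lambda>l. 1 / (1 - a * (l - x)))"
    using int_mu(1)[OF b _ i1] by simp
  have ae: "AE l in lborel. mp_density \<beta> l * ((l - x) / (1 - a * (l - x)))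
         = (1 / a^2) * (mp_density \<beta> l / (w - l)) - (1 / a) * mp_density \<beta> l"
    using AE_lborel_singleton[of w]
  proof eventually_elim
    case (elim l)
    then have "w - l \<noteq> 0" by simp
    then show ?case using a0 unfolding pw
      by (simp add: divide_simps w_def power2_eq_square) (simp add: algebra_simps)
  qed
  have m1: "(\<lambda>l. mp_density \<beta> l * ((l - x) / (1 - a * (l - x)))) \<in> borel_measurable lborel" by measurable
  have m2: "(\<lambda>l. (1 / a^2) * (mp_density \<beta> l / (w - l)) - (1 / a) * mp_density \<beta> l) \<in> borel_measurable lborel"
    by measurable
  have i2': "integrable lborel (\<lambda>l. (1 / a^2) * (mp_density \<beta> l / (w - l)) - (1 / a) * mp_density \<beta> l)"
    by (intro Bochner_Integration.integrable_diff integrable_mult_right FW(1) FF(1))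
  have i2: "integrable lborel (\<lambda>l. mp_density \<beta> l * ((l - x) / (1 - a * (l - x))))"
    using integrable_cong_AE[OF m1 m2 ae] i2' by simp
  show "integrable (mp_measure \<beta>) (\<lambda>l. (l - x) / (1 - a * (l - x)))"
    using int_mu(1)[OF b _ i2] by simp
  have "integral\<^sup>L lborel (\<lambda>l. mp_density \<beta> l * ((l - x) / (1 - a * (l - x))))
      = (1 / a^2) * integral\<^sup>L lborel (\<lambda>l. mp_density \<beta> l / (w - l)) - (1 / a) * (1 - c0 \<beta>)"
    unfolding integral_cong_AE[OF m1 m2 ae]
      Bochner_Integration.integral_diff[OF integrable_mult_right[OF FW(1)] integrable_mult_right[OF FF(1)]]
      integral_mult_right_zero FF(2) ..
  then show "integral\<^sup>L (mp_measure \<beta>) (\<lambda>l. (l - x) / (1 - a * (l - x))) =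
           c0 \<beta> * ((0 - x) / (1 - a * (0 - x)))
           + ((1 / a^2) * integral\<^sup>L lborel (\<lambda>l. mp_density \<beta> l / ((x + 1 / a) - l)) - (1 / a) * (1 - c0 \<beta>))"
    using int_mu(2)[OF b _ i2] by (simp add: w_def)
qed

lemma Gz:
  assumes b: "\<beta> > 0" and b1: "\<beta> \<noteq> 1" and x0: "x \<noteq> 0"
  shows "integrable (mp_measure \<beta>) (\<lambda>l. 1 / (1 - (- 1 / x) * (l - x)))"
        "integrable (mp_measure \<beta>) (\<lambda>l. (l - x) / (1 - (- 1 / x) * (l - x)))"
        "integral\<^sup>L (mp_measure \<beta>) (\<lambda>l. (l - x) / (1 - (- 1 / x) * (l - x))) =
           c0 \<beta> * ((0 - x) / (1 - (- 1 / x) * (0 - x)))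
           + (x * (1 - c0 \<beta>) - x^2 * integral\<^sup>L lborel (\<lambda>l. mp_density \<beta> l / l))"
proof -
  have pw: "1 - (- 1 / x) * (l - x) = l / x" for l using x0 by (simp add: divide_simps algebra_simps)
  note FL = Fl[OF b b1]
  note FF = F1[OF b]
  have e1: "(\<lambda>l. mp_density \<beta> l * (1 / (1 - (- 1 / x) * (l - x)))) = (\<lambda>l. x * (mp_density \<beta> l / l))"
    unfolding pw by (simp add: fun_eq_iff)
  have i1: "integrable lborel (\<lambda>l. mp_density \<beta> l * (1 / (1 - (- 1 / x) * (l - x))))"
    unfolding e1 by (intro integrable_mult_right FL(1))
  show "integrable (mp_measure \<beta>) (\<lambda>l. 1 / (1 - (- 1 / x) * (l - x)))"
    using int_mu(1)[OF b _ i1] by simp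
  have ae: "AE l in lborel. mp_density \<beta> l * ((l - x) / (1 - (- 1 / x) * (l - x)))
         = x * mp_density \<beta> l - x^2 * (mp_density \<beta> l / l)"
    using AE_lborel_singleton[of 0]
  proof eventually_elim
    case (elim l)
    then show ?case using x0 unfolding pw
      by (simp add: divide_simps power2_eq_square) (simp add: algebra_simps)
  qed
  have m1: "(\<lambda>l. mp_density \<beta> l * ((l - x) / (1 - (- 1 / x) * (l - x)))) \<in> borel_measurable lborel" by measurable
  have m2: "(\<lambda>l. x * mp_density \<beta> l - x^2 * (mp_density \<beta> l / l)) \<in> borel_measurable lborel"
    by measurable
  have i2': "integrable lborel (\<lambda>l. x * mp_density \<beta> l - x^2 * (mp_density \<beta> l / l))"
    by (intro Bochner_Integration.integrable_diff integrable_mult_right FL(1) FF(1))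
  have i2: "integrable lborel (\<lambda>l. mp_density \<beta> l * ((l - x) / (1 - (- 1 / x) * (l - x))))"
    using integrable_cong_AE[OF m1 m2 ae] i2' by simp
  show "integrable (mp_measure \<beta>) (\<lambda>l. (l - x) / (1 - (- 1 / x) * (l - x)))"
    using int_mu(1)[OF b _ i2] by simp
  have "integral\<^sup>L lborel (\<lambda>l. mp_density \<beta> l * ((l - x) / (1 - (- 1 / x) * (l - x))))
      = x * (1 - c0 \<beta>) - x^2 * integral\<^sup>L lborel (\<lambda>l. mp_density \<beta> l / l)"
    unfolding integral_cong_AE[OF m1 m2 ae]
      Bochner_Integration.integral_diff[OF integrable_mult_right[OF FF(1)] integrable_mult_right[OF FL(1)]]
      integral_mult_right_zero FF(2) ..
  then show "integral\<^sup>L (mp_measure \<beta>) (\<lambda>l. (l - x) / (1 - (- 1 / x) * (l - x))) =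
           c0 \<beta> * ((0 - x) / (1 - (- 1 / x) * (0 - x)))
           + (x * (1 - c0 \<beta>) - x^2 * integral\<^sup>L lborel (\<lambda>l. mp_density \<beta> l / l))"
    using int_mu(2)[OF b _ i2] by simp
qed

lemma absC: "\<beta> > 0 \<Longrightarrow> (1 + \<beta>) - \<bar>1 - \<beta>\<bar> = 2 * \<beta> * (1 - c0 \<beta>)"
  by (cases "\<beta> \<ge> 1") (auto simp: c0_def field_simps)

lemma p_pos:
  fixes a x l lt lp :: real
  assumes "lt < x" "x < lp" "-1 / (x - lt) \<le> a" "a \<le> 1 / (lp - x)" "lt < l" "l < lp"
  shows "1 - a * (l - x) > 0"
proof (cases "a \<ge> 0")
  case True
  have "a * (l - x) < 1"
  proof (cases "l \<le> x")
    case True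
    then show ?thesis using \<open>a \<ge> 0\<close> mult_nonneg_nonpos[of a "l - x"] by simp
  next
    case False
    have "a * (lp - x) \<le> 1" using assms by (simp add: field_simps)
    show ?thesis
    proof (cases "a = 0")
      case False
      then have "a * (l - x) < a * (lp - x)" using True assms by (intro mult_strict_left_mono) auto
      then show ?thesis using \<open>a * (lp - x) \<le> 1\<close> by linarith
    qed simp
  qed
  then show ?thesis by simp
next
  case False
  have "a * (l - x) < 1"
  proof (cases "l \<ge> x")
    case True
    then show ?thesis using False mult_nonpos_nonneg[of a "l - x"] by simp
  next
    case c2: False
    have "(- a) * (x - lt) \<le> 1" using assms by (simp add: field_simps)
    moreover have "(- a) * (x - l) < (- a) * (x - lt)" using False assms by (intro mult_strict_left_mono) auto
    ultimately show ?thesis by (simp add: algebra_simps)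
  qed
  then show ?thesis by simp
qed



lemma main_core:
  fixes \<beta> x as a0 :: real
  assumes b: "\<beta> > 0" and hx: "lam_t_minus \<beta> < x" "x < lam_plus \<beta>"
    and h: "psi_star \<beta> x 0 = - psi \<beta> x as"
    and a0in: "a0 \<in> {-1 / (x - lam_t_minus \<beta>) .. 1 / (lam_plus \<beta> - x)}"
    and ae0: "AE l in mp_measure \<beta>. 1 - a0 * (l - x) > 0"
    and i1: "integrable (mp_measure \<beta>) (\<lambda>l. 1 / (1 - a0 * (l - x)))"
    and iq: "integrable (mp_measure \<beta>) (\<lambda>l. (l - x) / (1 - a0 * (l - x)))"
    and sg: "\<And>a. a \<in> {-1 / (x - lam_t_minus \<beta>) .. 1 / (lam_plus \<beta> - x)} \<Longrightarrow>
               (a0 - a) * integral\<^sup>L (mp_measure \<beta>) (\<lambda>l. (l - x) / (1 - a0 * (l - x))) \<le> 0"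
  shows "as = a0"
proof (rule ccontr)
  assume ne: "as \<noteq> a0"
  have lt0: "lam_t_minus \<beta> \<ge> 0" by (simp add: lam_t_minus_def lam_minus_def)
  then have x0: "x > 0" using hx by simp
  have d1: "x - lam_t_minus \<beta> > 0" "lam_plus \<beta> - x > 0" using hx by auto
  have psi0: "psi \<beta> x 0 = 0"
  proof -
    have "(0::real) \<in> {-1 / (x - lam_t_minus \<beta>) .. 1 / (lam_plus \<beta> - x)}" using d1 by simp
    then show ?thesis by (simp add: psi_def)
  qed
  have min: "psi \<beta> x as \<le> psi \<beta> x a" for a
  proof -
    have "ereal (a * 0) - psi \<beta> x a \<le> psi_star \<beta> x 0"
      unfolding psi_star_def by (rule SUP_upper) simp
    then have "- psi \<beta> x a \<le> - psi \<beta> x as" using h by (cases "psi \<beta> x a") auto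
    then show ?thesis by simp
  qed
  have "psi \<beta> x as \<le> 0" using min[of 0] psi0 by simp
  then have cs: "as \<in> {-1 / (x - lam_t_minus \<beta>) .. 1 / (lam_plus \<beta> - x)}
         \<and> (AE l in mp_measure \<beta>. 1 - as * (l - x) > 0)
         \<and> integrable (mp_measure \<beta>) (\<lambda>l. ln (1 - as * (l - x)))"
    by (auto simp: psi_def split: if_splits)
  then have psis: "psi \<beta> x as = ereal (- (\<integral>l. ln (1 - as * (l - x)) \<partial>mp_measure \<beta>))"
    by (simp add: psi_def)
  have il0: "integrable (mp_measure \<beta>) (\<lambda>l. ln (1 - a0 * (l - x)))"
    by (rule ln_int[OF b ae0 i1])
  have psi0': "psi \<beta> x a0 = ereal (- (\<integral>l. ln (1 - a0 * (l - x)) \<partial>mp_measure \<beta>))"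
    using a0in ae0 il0 by (simp add: psi_def)
  have "integral\<^sup>L (mp_measure \<beta>) (\<lambda>l. ln (1 - as * (l - x)))
       < integral\<^sup>L (mp_measure \<beta>) (\<lambda>l. ln (1 - a0 * (l - x)))"
    using key[OF b _ ae0 _ il0 _ iq sg[OF cs[THEN conjunct1]] ne] cs x0 by simp
  then have "psi \<beta> x a0 < psi \<beta> x as" unfolding psis psi0' by simp
  then show False using min[of a0] by simp
qed



lemma caseU:
  fixes \<beta> x :: real
  assumes b: "\<beta> > 0" and hx: "lam_t_minus \<beta> < x" "x < lam_plus \<beta>"
    and xu: "x \<ge> 1 + sqrt \<beta>"
  defines "a0 \<equiv> 1 / (lam_plus \<beta> - x)"
  shows "a0 \<in> {-1 / (x - lam_t_minus \<beta>) .. 1 / (lam_plus \<beta> - x)}"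
    "AE l in mp_measure \<beta>. 1 - a0 * (l - x) > 0"
    "integrable (mp_measure \<beta>) (\<lambda>l. 1 / (1 - a0 * (l - x)))"
    "integrable (mp_measure \<beta>) (\<lambda>l. (l - x) / (1 - a0 * (l - x)))"
    "\<And>a. a \<in> {-1 / (x - lam_t_minus \<beta>) .. 1 / (lam_plus \<beta> - x)} \<Longrightarrow>
               (a0 - a) * integral\<^sup>L (mp_measure \<beta>) (\<lambda>l. (l - x) / (1 - a0 * (l - x))) \<le> 0"
proof -
  define s where "s = sqrt \<beta>"
  define lp where "lp = lam_plus \<beta>"
  define C where "C = c0 \<beta>"
  have s: "s > 0" "s^2 = \<beta>" using b by (auto simp: s_def)
  have lpe: "lp = (1 + s)^2" by (simp add: lp_def lam_plus_def s_def)
  have lt0: "lam_t_minus \<beta> \<ge> 0" by (simp add: lam_t_minus_def lam_minus_def)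
  have x0: "x > 0" using hx lt0 by simp
  define D where "D = lp - x"
  have D: "D > 0" using hx by (simp add: D_def lp_def)
  have a0D: "a0 = 1 / D" by (simp add: a0_def D_def lp_def)
  have a0p: "a0 > 0" using D a0D by simp
  show "a0 \<in> {-1 / (x - lam_t_minus \<beta>) .. 1 / (lam_plus \<beta> - x)}"
    using a0p hx by (auto simp: a0_def intro: order_trans[of _ 0])
  have w: "x + 1 / a0 = lp" using a0D by (simp add: D_def)
  have lpos: "lp > 0" using lpe s by simp
  have dr: "\<bar>(x + 1 / a0) - (1 + \<beta>)\<bar> \<ge> 2 * sqrt \<beta>"
    unfolding w lpe using s by (simp add: s_def[symmetric] power2_eq_square algebra_simps)
  note G = Gw[OF b a0p[THEN less_imp_neq, symmetric] _ dr, unfolded w]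
  show ae: "AE l in mp_measure \<beta>. 1 - a0 * (l - x) > 0"
  proof (rule AE_mu[OF b])
    fix l assume "lam_minus \<beta> < l" "l < lam_plus \<beta>"
    then have "1 - a0 * (l - x) = a0 * (lp - l)" using a0D D by (simp add: D_def divide_simps lp_def) (simp add: algebra_simps)
    then show "1 - a0 * (l - x) > 0" using a0p \<open>l < lam_plus \<beta>\<close> by (simp add: lp_def)
  next
    show "1 - a0 * (0 - x) > 0" using a0p x0 by (simp add: add_pos_pos)
  qed
  show "integrable (mp_measure \<beta>) (\<lambda>l. 1 / (1 - a0 * (l - x)))" using G(1) lpos by simp
  show "integrable (mp_measure \<beta>) (\<lambda>l. (l - x) / (1 - a0 * (l - x)))" using G(2) lpos by simp
  have Fv: "integral\<^sup>L lborel (\<lambda>l. mp_density \<beta> l / (lp - l)) = (2 * \<beta> * (1 - C) + 2 * s) / (2 * \<beta> * lp)"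
  proof -
    have e: "lp - (1 + \<beta>) = 2 * s" using lpe s by (simp add: power2_eq_square algebra_simps)
    have "(2 * s)^2 - 4 * \<beta> = 0" using s by (simp add: power_mult_distrib)
    then show ?thesis using Fw(2)[OF b, of lp] lpos dr w absC[OF b] s e by (simp add: C_def)
  qed
  have Gv: "integral\<^sup>L (mp_measure \<beta>) (\<lambda>l. (l - x) / (1 - a0 * (l - x))) = D * ((1 + s) * (1 + s - x)) / (s * lp)"
  proof -
    have "integral\<^sup>L (mp_measure \<beta>) (\<lambda>l. (l - x) / (1 - a0 * (l - x)))
       = C * ((0 - x) / (1 - a0 * (0 - x))) + ((1 / a0^2) * ((2 * \<beta> * (1 - C) + 2 * s) / (2 * \<beta> * lp)) - (1 / a0) * (1 - C))"
      using G(3) lpos Fv by (simp add: C_def)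
    also have "\<dots> = D * ((1 + s) * (1 + s - x)) / (s * lp)"
      unfolding a0D using D s lpos x0 unfolding D_def lpe s(2)[symmetric]
      by (simp add: divide_simps) (simp add: power2_eq_square algebra_simps)
    finally show ?thesis .
  qed
  have Gle: "integral\<^sup>L (mp_measure \<beta>) (\<lambda>l. (l - x) / (1 - a0 * (l - x))) \<le> 0"
    unfolding Gv using D s lpos xu
    by (intro divide_nonpos_pos mult_nonneg_nonpos mult_nonneg_nonpos) (auto simp: s_def)
  fix a assume "a \<in> {-1 / (x - lam_t_minus \<beta>) .. 1 / (lam_plus \<beta> - x)}"
  then have "a0 - a \<ge> 0" by (simp add: a0_def)
  then show "(a0 - a) * integral\<^sup>L (mp_measure \<beta>) (\<lambda>l. (l - x) / (1 - a0 * (l - x))) \<le> 0"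
    using Gle by (simp add: mult_nonneg_nonpos)
qed

lemma caseL:
  fixes \<beta> x :: real
  assumes b: "\<beta> > 0" and b1: "\<beta> < 1" and hx: "lam_t_minus \<beta> < x" "x < lam_plus \<beta>"
    and xl: "x \<le> 1 - sqrt \<beta>"
  defines "a0 \<equiv> - 1 / (x - lam_minus \<beta>)"
  shows "a0 \<in> {-1 / (x - lam_t_minus \<beta>) .. 1 / (lam_plus \<beta> - x)}"
    "AE l in mp_measure \<beta>. 1 - a0 * (l - x) > 0"
    "integrable (mp_measure \<beta>) (\<lambda>l. 1 / (1 - a0 * (l - x)))"
    "integrable (mp_measure \<beta>) (\<lambda>l. (l - x) / (1 - a0 * (l - x)))"
    "\<And>a. a \<in> {-1 / (x - lam_t_minus \<beta>) .. 1 / (lam_plus \<beta> - x)} \<Longrightarrow>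
               (a0 - a) * integral\<^sup>L (mp_measure \<beta>) (\<lambda>l. (l - x) / (1 - a0 * (l - x))) \<le> 0"
proof -
  define s where "s = sqrt \<beta>"
  define lm where "lm = lam_minus \<beta>"
  have s: "s > 0" "s^2 = \<beta>" "s < 1" using b b1 by (auto simp: s_def)
  have lme: "lm = (1 - s)^2" by (simp add: lm_def lam_minus_def s_def)
  have ltm: "lam_t_minus \<beta> = lm" using b1 by (simp add: lam_t_minus_def lm_def)
  have C: "c0 \<beta> = 0" using b b1 by (simp add: c0_def)
  define D where "D = x - lm"
  have D: "D > 0" using hx ltm by (simp add: D_def)
  have a0D: "a0 = - 1 / D" by (simp add: a0_def D_def lm_def)
  have a0n: "a0 < 0" using D a0D by simp
  have lmpos: "lm > 0" using lme s by simp
  have lp_gt: "lam_plus \<beta> - x > 0" using hx by simp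
  show "a0 \<in> {-1 / (x - lam_t_minus \<beta>) .. 1 / (lam_plus \<beta> - x)}"
    using a0n lp_gt by (auto simp: a0_def ltm lm_def intro: order_trans[of _ 0])
  have w: "x + 1 / a0 = lm" using a0D D by (simp add: D_def)
  have dr: "\<bar>(x + 1 / a0) - (1 + \<beta>)\<bar> \<ge> 2 * sqrt \<beta>"
    unfolding w lme using s by (simp add: s_def[symmetric] power2_eq_square algebra_simps)
  note G = Gw[OF b a0n[THEN less_imp_neq] _ dr, unfolded w]
  show ae: "AE l in mp_measure \<beta>. 1 - a0 * (l - x) > 0"
  proof (rule AE_mu[OF b])
    fix l assume l: "lam_minus \<beta> < l" "l < lam_plus \<beta>"
    have "1 - a0 * (l - x) = (l - lm) / D" unfolding a0D using D by (simp add: divide_simps) (simp add: D_def algebra_simps)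
    then show "1 - a0 * (l - x) > 0" using D l by (simp add: lm_def)
  next
    assume "c0 \<beta> > 0" then show "1 - a0 * (0 - x) > 0" using C by simp
  qed
  show "integrable (mp_measure \<beta>) (\<lambda>l. 1 / (1 - a0 * (l - x)))" using G(1) lmpos by simp
  show "integrable (mp_measure \<beta>) (\<lambda>l. (l - x) / (1 - a0 * (l - x)))" using G(2) lmpos by simp
  have Fv: "integral\<^sup>L lborel (\<lambda>l. mp_density \<beta> l / (lm - l)) = (2 * \<beta> - 2 * s) / (2 * \<beta> * lm)"
  proof -
    have e: "lm - (1 + \<beta>) = - (2 * s)" using lme s by (simp add: power2_eq_square algebra_simps)
    have "(- (2 * s))^2 - 4 * \<beta> = 0" using s by (simp add: power_mult_distrib)
    moreover have "(1 + \<beta>) - \<bar>1 - \<beta>\<bar> = 2 * \<beta>" using b1 by simp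
    ultimately show ?thesis using Fw(2)[OF b, of lm] lmpos dr w s e by simp
  qed
  have Gv: "integral\<^sup>L (mp_measure \<beta>) (\<lambda>l. (l - x) / (1 - a0 * (l - x))) = D * ((1 - s) * (1 - s - x)) / (s * lm)"
  proof -
    have "integral\<^sup>L (mp_measure \<beta>) (\<lambda>l. (l - x) / (1 - a0 * (l - x)))
       = (1 / a0^2) * ((2 * \<beta> - 2 * s) / (2 * \<beta> * lm)) - (1 / a0)"
      using G(3) lmpos Fv C by simp
    also have "\<dots> = D * ((1 - s) * (1 - s - x)) / (s * lm)"
      unfolding a0D using D s lmpos unfolding D_def lme s(2)[symmetric]
      by (simp add: divide_simps) (simp add: power2_eq_square algebra_simps)
    finally show ?thesis .
  qed
  have Gge: "integral\<^sup>L (mp_measure \<beta>) (\<lambda>l. (l - x) / (1 - a0 * (l - x))) \<ge> 0"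
    unfolding Gv using D s lmpos xl
    by (intro divide_nonneg_pos mult_nonneg_nonneg) (auto simp: s_def)
  fix a assume "a \<in> {-1 / (x - lam_t_minus \<beta>) .. 1 / (lam_plus \<beta> - x)}"
  then have "a0 - a \<le> 0" by (simp add: a0_def ltm lm_def)
  then show "(a0 - a) * integral\<^sup>L (mp_measure \<beta>) (\<lambda>l. (l - x) / (1 - a0 * (l - x))) \<le> 0"
    using Gge by (simp add: mult_nonpos_nonneg)
qed

lemma caseI:
  fixes \<beta> x :: real
  assumes b: "\<beta> > 0" and hx: "lam_t_minus \<beta> < x" "x < lam_plus \<beta>"
    and xi1: "x < 1 + sqrt \<beta>" and xi2: "1 - sqrt \<beta> < x"
  defines "a0 \<equiv> (1 / \<beta>) * ((x - 1) / x)"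
  shows "a0 \<in> {-1 / (x - lam_t_minus \<beta>) .. 1 / (lam_plus \<beta> - x)}"
    "AE l in mp_measure \<beta>. 1 - a0 * (l - x) > 0"
    "integrable (mp_measure \<beta>) (\<lambda>l. 1 / (1 - a0 * (l - x)))"
    "integrable (mp_measure \<beta>) (\<lambda>l. (l - x) / (1 - a0 * (l - x)))"
    "\<And>a. a \<in> {-1 / (x - lam_t_minus \<beta>) .. 1 / (lam_plus \<beta> - x)} \<Longrightarrow>
               (a0 - a) * integral\<^sup>L (mp_measure \<beta>) (\<lambda>l. (l - x) / (1 - a0 * (l - x))) \<le> 0"
proof -
  define s where "s = sqrt \<beta>"
  define lp where "lp = lam_plus \<beta>"
  define lm where "lm = lam_minus \<beta>"
  define y where "y = x - 1"
  define C where "C = c0 \<beta>"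
  have s: "s > 0" "s^2 = \<beta>" using b by (auto simp: s_def)
  have lpe: "lp = (1 + s)^2" by (simp add: lp_def lam_plus_def s_def)
  have lme: "lm = (1 - s)^2" by (simp add: lm_def lam_minus_def s_def)
  have lt0: "lam_t_minus \<beta> \<ge> 0" by (simp add: lam_t_minus_def lam_minus_def)
  have x0: "x > 0" using hx lt0 by simp
  have xe: "x = 1 + y" by (simp add: y_def)
  have ys: "\<bar>y\<bar> < s" using xi1 xi2 by (simp add: y_def s_def abs_less_iff)
  have y2: "y^2 < \<beta>"
  proof -
    have "\<bar>y\<bar>^2 < s^2" using ys power_strict_mono[of "\<bar>y\<bar>" s 2] by simp
    then show ?thesis using s by simp
  qed
  have a0y: "a0 = y / (\<beta> * x)" by (simp add: a0_def y_def)
  have lpx: "lp - x > 0" using hx by (simp add: lp_def)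
  have bx: "\<beta> * x > 0" using b x0 by simp
  have hi: "a0 \<le> 1 / (lam_plus \<beta> - x)"
  proof -
    have "y * (lp - x) - \<beta> * x = - ((s - y)^2)"
      unfolding lpe xe s(2)[symmetric] by (simp add: power2_eq_square algebra_simps)
    then have "y * (lp - x) \<le> \<beta> * x" by (smt (verit) zero_le_power2)
    then show ?thesis unfolding a0y lp_def[symmetric] using lpx bx by (simp add: divide_simps)
  qed
  have lo: "-1 / (x - lam_t_minus \<beta>) \<le> a0"
  proof (cases "\<beta> \<ge> 1")
    case True
    then have "lam_t_minus \<beta> = 0" by (simp add: lam_t_minus_def)
    moreover have "- \<beta> \<le> y" using True x0 xe by simp
    ultimately show ?thesis unfolding a0y using x0 bx by (simp add: divide_simps)
  next
    case False
    then have ltm: "lam_t_minus \<beta> = lm" by (simp add: lam_t_minus_def lm_def)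
    have xm: "x - lm > 0" using hx ltm by simp
    have "y * (x - lm) + \<beta> * x = (y + s)^2"
      unfolding lme xe s(2)[symmetric] by (simp add: power2_eq_square algebra_simps)
    then have "- (\<beta> * x) \<le> y * (x - lm)" by (smt (verit) zero_le_power2)
    then show ?thesis unfolding a0y ltm using xm bx by (simp add: divide_simps)
  qed
  show a0in: "a0 \<in> {-1 / (x - lam_t_minus \<beta>) .. 1 / (lam_plus \<beta> - x)}" using lo hi by simp
  show ae: "AE l in mp_measure \<beta>. 1 - a0 * (l - x) > 0"
  proof (rule AE_mu[OF b])
    fix l assume l: "lam_minus \<beta> < l" "l < lam_plus \<beta>"
    have "lam_t_minus \<beta> \<le> lam_minus \<beta>" by (simp add: lam_t_minus_def lam_minus_def)
    then show "1 - a0 * (l - x) > 0" using p_pos[OF hx lo hi] l by simp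
  next
    assume "c0 \<beta> > 0"
    then have b1: "\<beta> > 1" by (simp add: c0_def) (smt (verit) b divide_less_eq_1_pos)
    have "y / \<beta> > -1" using b1 xe x0 by (simp add: divide_simps)
    then show "1 - a0 * (0 - x) > 0" unfolding a0y using x0 b by (simp add: divide_simps)
  qed
  have Gz0: "integral\<^sup>L (mp_measure \<beta>) (\<lambda>l. (l - x) / (1 - a0 * (l - x))) = 0 \<and>
      integrable (mp_measure \<beta>) (\<lambda>l. 1 / (1 - a0 * (l - x))) \<and>
      integrable (mp_measure \<beta>) (\<lambda>l. (l - x) / (1 - a0 * (l - x)))"
  proof (cases "y = 0")
    case True
    then have a00: "a0 = 0" by (simp add: a0y)
    note B = mu_int_basic[OF b]
    have cx: "integrable (mp_measure \<beta>) (\<lambda>l. x)"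
      using Bochner_Integration.integrable_mult_right[of x "mp_measure \<beta>" "\<lambda>l. 1"] B(2) by simp
    have "integral\<^sup>L (mp_measure \<beta>) (\<lambda>l. l - x) = 1 - x * 1"
      using Bochner_Integration.integral_diff[OF B(1) cx] B(3) B(4) by simp
    then show ?thesis using B True a00 xe by (auto intro!: Bochner_Integration.integrable_diff integrable_mult_right)
  next
    case y0: False
    show ?thesis
    proof (cases "\<beta> + y = 0")
      case False
      have a0n: "a0 \<noteq> 0" using y0 b x0 by (simp add: a0y)
      have we: "x + 1 / a0 = x * (y + \<beta>) / y" unfolding a0y using y0 bx x0
        by (simp add: divide_simps) (simp add: algebra_simps)
      have w0: "x + 1 / a0 \<noteq> 0" unfolding we using x0 y0 False by (simp add: add.commute)
      have de: "(x + 1 / a0) - (1 + \<beta>) = y + \<beta> / y" unfolding we using y0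
        by (simp add: divide_simps xe) (simp add: algebra_simps)
      have dr: "\<bar>(x + 1 / a0) - (1 + \<beta>)\<bar> \<ge> 2 * sqrt \<beta>"
      proof -
        have yyb: "y * y + \<beta> > 0" using b by (simp add: add_nonneg_pos)
        have "(\<bar>y\<bar> - s)^2 \<ge> 0" by simp
        then have "2 * s * \<bar>y\<bar> \<le> y^2 + \<beta>" using s by (simp add: power2_eq_square algebra_simps)
        then have "2 * s \<le> (y^2 + \<beta>) / \<bar>y\<bar>" using y0 by (simp add: divide_simps)
        also have "(y^2 + \<beta>) / \<bar>y\<bar> = \<bar>y + \<beta> / y\<bar>" using y0 b yyb
          apply (cases "y > 0")
           apply (simp_all add: divide_simps power2_eq_square abs_if add_pos_pos)
          using yyb by linarith
        finally show ?thesis unfolding de s_def .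
      qed
      note G = Gw[OF b a0n w0 dr]
      have sq: "sqrt ((y + \<beta> / y)^2 - 4 * \<beta>) = \<bar>y - \<beta> / y\<bar>"
      proof -
        have "(y + \<beta> / y)^2 - 4 * \<beta> = (y - \<beta> / y)^2" using y0
          by (simp add: power2_eq_square divide_simps) (simp add: algebra_simps)
        then show ?thesis by simp
      qed
      have sg2: "(y + \<beta> / y) - sgn (y + \<beta> / y) * \<bar>y - \<beta> / y\<bar> = 2 * y"
      proof (cases "y > 0")
        case True
        then have "y * y < \<beta>" using y2 by (simp add: power2_eq_square)
        then have "y < \<beta> / y" using True by (simp add: divide_simps)
        moreover have "y + \<beta> / y > 0" using True b by (simp add: add_pos_pos)
        ultimately show ?thesis by simp
      next
        case False
        then have yn: "y < 0" using y0 by simp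
        then have "y * y < \<beta>" using y2 by (simp add: power2_eq_square)
        then have "\<beta> / y < y" using yn by (simp add: divide_simps)
        moreover have "\<beta> / y < 0" using yn b by (simp add: divide_pos_neg)
        moreover have "y + \<beta> / y < 0" using yn calculation(2) by simp
        ultimately show ?thesis by simp
      qed
      have Fv: "integral\<^sup>L lborel (\<lambda>l. mp_density \<beta> l / ((x + 1 / a0) - l)) = (2 * \<beta> * (1 - C) + 2 * y) / (2 * \<beta> * (x + 1 / a0))"
        using Fw(2)[OF b w0 dr] absC[OF b] unfolding de sq sg2 by (simp add: C_def)
      have "integral\<^sup>L (mp_measure \<beta>) (\<lambda>l. (l - x) / (1 - a0 * (l - x)))
         = C * ((0 - x) / (1 - a0 * (0 - x))) + ((1 / a0^2) * ((2 * \<beta> * (1 - C) + 2 * y) / (2 * \<beta> * (x + 1 / a0))) - (1 / a0) * (1 - C))"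
        using G(3) Fv by (simp add: C_def)
      also have "\<dots> = 0"
      proof -
        have yb: "y + \<beta> \<noteq> 0" using False by (simp add: add.commute)
        show ?thesis unfolding we unfolding a0y using y0 b x0 yb
          by (simp add: divide_simps) (simp add: xe power2_eq_square algebra_simps)
      qed
      finally show ?thesis using G(1,2) by simp
    next
      case True
      then have xb: "x = 1 - \<beta>" using xe by simp
      then have b1: "\<beta> < 1" using x0 by simp
      have a0e: "a0 = - 1 / x" unfolding a0y using True b x0 y0 by (simp add: divide_simps)
      have C0: "C = 0" using b1 b by (simp add: C_def c0_def)
      note G = Gz[OF b b1[THEN less_imp_neq] x0[THEN less_imp_neq, symmetric]]
      have Flv: "integral\<^sup>L lborel (\<lambda>l. mp_density \<beta> l / l) = 1 / x"
        using Fl(2)[OF b b1[THEN less_imp_neq]] b1 b xb by (simp add: divide_simps)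
      have "integral\<^sup>L (mp_measure \<beta>) (\<lambda>l. (l - x) / (1 - a0 * (l - x))) = 0"
        unfolding a0e G(3) Flv using C0 x0 by (simp add: C_def power2_eq_square)
      then show ?thesis using G(1,2) a0e by simp
    qed
  qed
  then show "integrable (mp_measure \<beta>) (\<lambda>l. 1 / (1 - a0 * (l - x)))"
    "integrable (mp_measure \<beta>) (\<lambda>l. (l - x) / (1 - a0 * (l - x)))" by auto
  fix a show "(a0 - a) * integral\<^sup>L (mp_measure \<beta>) (\<lambda>l. (l - x) / (1 - a0 * (l - x))) \<le> 0"
    using Gz0 by simp
qed



theorem proposition5:
  fixes \<beta> x \<alpha>s :: real
  assumes "\<beta> > 0"
    and "lam_t_minus \<beta> < x" and "x < lam_plus \<beta>"
    and "psi_star \<beta> x 0 = - psi \<beta> x \<alpha>s"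
  shows "\<alpha>s = (if x \<ge> 1 + sqrt \<beta> then 1 / (lam_plus \<beta> - x)
               else if x \<le> 1 - sqrt \<beta> \<and> \<beta> < 1 then - 1 / (x - lam_minus \<beta>)
               else (1 / \<beta>) * ((x - 1) / x))"
proof -
  note b = assms(1) and hx = assms(2,3) and h = assms(4)
  show ?thesis
  proof (cases "x \<ge> 1 + sqrt \<beta>")
    case True
    note C = caseU[OF b hx True]
    show ?thesis unfolding if_P[OF True] by (rule main_core[OF b hx h C(1-4) C(5)])
  next
    case nU: False
    show ?thesis
    proof (cases "x \<le> 1 - sqrt \<beta> \<and> \<beta> < 1")
      case True
      note C = caseL[OF b True[THEN conjunct2] hx True[THEN conjunct1]]
      show ?thesis unfolding if_not_P[OF nU] if_P[OF True] by (rule main_core[OF b hx h C(1-4) C(5)])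
    next
      case False
      have lt0: "lam_t_minus \<beta> \<ge> 0" by (simp add: lam_t_minus_def lam_minus_def)
      have x1: "x < 1 + sqrt \<beta>" using nU by simp
      have x2: "1 - sqrt \<beta> < x"
      proof (cases "\<beta> < 1")
        case True then show ?thesis using False by auto
      next
        case False
        then have s1: "sqrt \<beta> \<ge> 1" by simp
        show ?thesis using hx lt0 s1 by linarith
      qed
      note C = caseI[OF b hx x1 x2]
      show ?thesis unfolding if_not_P[OF nU] if_not_P[OF False] by (rule main_core[OF b hx h C(1-4) C(5)])
    qed
  qed
qed


end
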